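(* Let $\mathbf{X}$ be an exchangeable random vector in $\mathbb{R}^n$ with $\mathbb{E}[X_k^2]<\infty$ for all $k\in[n]$, and let $\mathbf{Y}$ satisfy $\mathbf{Y}|\mathbf{X}=\mathbf{x}\sim\mathcal{N}(\mathbf{x},\sigma^2\mathbf{I}_n)$ with $\sigma>0$. Define $$g(\mathbf{y})=\mathbb{P}[\mathbf{X}\in\vec{\mathbb{R}}_n|\mathbf{Y}=\mathbf{y}]\left(1-\mathbb{P}[\mathbf{X}\in\vec{\mathbb{R}}_n|\mathbf{Y}=\mathbf{y}]\right)$$ and $$\Delta_{\mathrm{up}}=\sum_{\pi\in\mathcal{P}}\mathbb{E}\left[\|\mathbf{X}\|^2 g(\mathbf{P}_\pi\mathbf{Y})\,\middle|\,\mathbf{Y}\in\vec{\mathbb{R}}_n\right]$$ (which depends on $\sigma$). Then $$\lim_{\sigma\to 0}\Delta_{\mathrm{up}}=0,\qquad \lim_{\sigma\to\infty}\Delta_{\mathrm{up}}=\mathbb{E}[\|\mathbf{X}\|^2]\left(1-\frac{1}{n!}\right).$$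
   Context: $\vec{\mathbb{R}}_n$ is the set of vectors in $\mathbb{R}^n$ whose entries are in ascending order. $[n]=\{1,\dots,n\}$; $\mathcal{P}$ is the set of permutations of $[n]$ and $\mathbf{P}_\pi$ the permutation matrix of $\pi$. A random vector is exchangeable if its distribution is invariant under every permutation of its coordinates.
   Formalization: X is also assumed to have almost surely pairwise distinct coordinates, so ties among its entries have probability zero. The paper assumes this as well. *)

theory Defs
  imports "HOL-Probability.Probability"
begin

text \<open>Vectors in R^n are modelled as real^'n with a finite linearly ordered index type 'n
  (n = CARD('n)). The law of the random vector X is a probability measure M on the Borel sets.\<close>

definition ascending :: "(real ^ ('n::{finite,linorder})) set" where
  "ascending = {x. \<forall>i j. i \<le> j \<longrightarrow> x $ i \<le> x $ j}"

definition perm_vec :: "('n::finite \<Rightarrow> 'n) \<Rightarrow> real ^ 'n \<Rightarrow> real ^ 'n" where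
  "perm_vec p x = (\<chi> i. x $ p i)"

definition exchangeable :: "(real ^ ('n::finite)) measure \<Rightarrow> bool" where
  "exchangeable M \<longleftrightarrow> (\<forall>p. p permutes (UNIV :: 'n set) \<longrightarrow> distr M borel (perm_vec p) = M)"

definition gauss :: "real \<Rightarrow> real ^ ('n::finite) \<Rightarrow> real" where
  "gauss \<sigma> v = (\<Prod>i\<in>UNIV. normal_density 0 \<sigma> (v $ i))"

text \<open>Version of P[X \<in> A | Y = y] given by Bayes' formula, where Y | X = x ~ N(x, sigma^2 I).\<close>
definition post_prob :: "(real ^ ('n::finite)) measure \<Rightarrow> real \<Rightarrow> (real ^ 'n) set \<Rightarrow> real ^ 'n \<Rightarrow> real" where
  "post_prob M \<sigma> A y =
     (\<integral>x. indicator A x * gauss \<sigma> (y - x) \<partial>M) / (\<integral>x. gauss \<sigma> (y - x) \<partial>M)"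

definition gfun :: "(real ^ ('n::{finite,linorder})) measure \<Rightarrow> real \<Rightarrow> real ^ ('n::{finite,linorder}) \<Rightarrow> real" where
  "gfun M \<sigma> y = post_prob M \<sigma> ascending y * (1 - post_prob M \<sigma> ascending y)"

text \<open>Joint expectation E[f(X,Y)] where X ~ M and Y | X = x ~ N(x, sigma^2 I).\<close>
definition joint_exp :: "(real ^ ('n::finite)) measure \<Rightarrow> real \<Rightarrow> (real ^ 'n \<Rightarrow> real ^ 'n \<Rightarrow> real) \<Rightarrow> real" where
  "joint_exp M \<sigma> f = (\<integral>x. (\<integral>y. f x y * gauss \<sigma> (y - x) \<partial>lborel) \<partial>M)"

definition Delta_up :: "(real ^ ('n::{finite,linorder})) measure \<Rightarrow> real \<Rightarrow> real" where
  "Delta_up M \<sigma> =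
     (\<Sum>p\<in>{p. p permutes (UNIV :: 'n set)}.
        joint_exp M \<sigma> (\<lambda>x y. indicator ascending y * (norm x)\<^sup>2 * gfun M \<sigma> (perm_vec p y))
        / joint_exp M \<sigma> (\<lambda>x y. indicator ascending y))"

end

theory Submission
  imports Defs
begin



lemma gauss_pos: "0 < \<sigma> \<Longrightarrow> 0 < gauss \<sigma> v"
  unfolding gauss_def by (intro prod_pos normal_density_pos) auto

lemma gauss_nonneg: "0 \<le> gauss \<sigma> v"
  unfolding gauss_def by (intro prod_nonneg normal_density_nonneg)

lemma gauss_measurable[measurable]: "gauss \<sigma> \<in> borel_measurable borel"
  unfolding gauss_def by measurable

lemma perm_vec_nth[simp]: "perm_vec p x $ i = x $ p i"
  by (simp add: perm_vec_def)

lemma perm_vec_measurable[measurable]: "perm_vec p \<in> borel_measurable borel"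
proof -
  have "continuous_on UNIV (perm_vec p)"
    unfolding perm_vec_def
    by (intro continuous_on_vec_lambda linear_continuous_on bounded_linear_vec_nth)
  then show ?thesis by (rule borel_measurable_continuous_onI)
qed

lemma perm_vec_diff: "perm_vec p (x - y) = perm_vec p x - perm_vec p y"
  by (simp add: perm_vec_def vec_eq_iff)

lemma gauss_perm: "p permutes UNIV \<Longrightarrow> gauss \<sigma> (perm_vec p v) = gauss \<sigma> v"
  unfolding gauss_def perm_vec_nth
  by (rule prod.permute[symmetric, where g="\<lambda>i. normal_density 0 \<sigma> (v $ i)", simplified comp_def])

lemma gauss_bound: "0 < \<sigma> \<Longrightarrow> gauss \<sigma> v \<le> (1 / sqrt (2 * pi * \<sigma>\<^sup>2)) ^ CARD('n)"
  for v :: "real ^ 'n::finite"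
proof -
  assume s: "0 < \<sigma>"
  have "gauss \<sigma> v \<le> (\<Prod>i\<in>(UNIV::'n set). 1 / sqrt (2 * pi * \<sigma>\<^sup>2))"
    unfolding gauss_def
  proof (intro prod_mono conjI normal_density_nonneg)
    fix i show "normal_density 0 \<sigma> (v $ i) \<le> 1 / sqrt (2 * pi * \<sigma>\<^sup>2)"
      unfolding normal_density_def using s by (auto intro!: mult_left_le simp: field_simps)
  qed
  then show ?thesis by simp
qed

lemma nn_integral_gauss:
  assumes s: "0 < \<sigma>"
  shows "(\<integral>\<^sup>+v. ennreal (gauss \<sigma> (v :: real ^ 'n::finite)) \<partial>lborel) = 1"
proof -
  have inj: "inj (\<lambda>i::'n. axis i (1::real))"
    by (auto intro!: injI simp: axis_eq_axis)
  have B: "(Basis :: (real^'n) set) = (\<lambda>i. axis i 1) ` UNIV"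
    by (auto simp: Basis_vec_def)
  have pr: "gauss \<sigma> v = (\<Prod>b\<in>Basis. normal_density 0 \<sigma> (v \<bullet> b))" for v :: "real^'n"
    by (simp add: gauss_def B prod.reindex[OF inj] inner_axis)
  have "(\<lambda>v::real^'n. ennreal (gauss \<sigma> v)) = (\<lambda>v. (\<Prod>b\<in>Basis. ennreal (normal_density 0 \<sigma> (v \<bullet> b))))"
    by (simp add: pr prod_ennreal normal_density_nonneg)
  then have "(\<integral>\<^sup>+v. ennreal (gauss \<sigma> (v::real^'n)) \<partial>lborel) =
     (\<Prod>b\<in>(Basis :: (real^'n) set). (\<integral>\<^sup>+x. ennreal (normal_density 0 \<sigma> x) \<partial>lborel))"
    by (simp only:) (rule nn_integral_lborel_prod, auto)
  also have "(\<integral>\<^sup>+x. ennreal (normal_density 0 \<sigma> x) \<partial>lborel) = 1"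
  proof -
    interpret prob_space "density lborel (normal_density 0 \<sigma>)"
      using prob_space_normal_density s by blast
    have "emeasure (density lborel (normal_density 0 \<sigma>)) UNIV = 1"
      using emeasure_space_1 by simp
    then show ?thesis by (simp add: emeasure_density)
  qed
  finally show ?thesis by simp
qed

lemma normal_density_scale:
  assumes s: "0 < \<sigma>" shows "\<sigma> * normal_density 0 \<sigma> (\<sigma> * t) = normal_density 0 1 t"
  using s by (simp add: normal_density_def real_sqrt_mult power_mult_distrib field_simps)

lemma gauss_scale:
  assumes s: "0 < \<sigma>" shows "\<sigma> ^ CARD('n) * gauss \<sigma> (\<sigma> *\<^sub>R z) = gauss 1 (z :: real^'n::finite)"
  unfolding gauss_def
  by (simp add: prod.distrib[symmetric] normal_density_scale[OF s] flip: prod_constant)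

definition stdN :: "(real ^ 'n::finite) measure" where
  "stdN = density lborel (\<lambda>z. ennreal (gauss 1 z))"

lemma prob_space_stdN: "prob_space stdN"
  unfolding stdN_def
  by (rule prob_spaceI) (simp add: emeasure_density nn_integral_gauss)

lemma sets_stdN[simp, measurable_cong]: "sets stdN = sets borel"
  by (simp add: stdN_def)

lemma integral_gauss_subst:
  fixes f :: "real ^ 'n::finite \<Rightarrow> real"
  assumes s: "0 < \<sigma>" and f[measurable]: "f \<in> borel_measurable borel"
  shows "(\<integral>y. f y * gauss \<sigma> (y - x) \<partial>lborel) = (\<integral>z. f (x + \<sigma> *\<^sub>R z) \<partial>stdN)"
proof -
  have "(\<integral>y. f y * gauss \<sigma> (y - x) \<partial>lborel) =
    (\<integral>y. f y * gauss \<sigma> (y - x) \<partial>(density (distr lborel borel (\<lambda>z. x + \<sigma> *\<^sub>R z)) (\<lambda>_. \<bar>\<sigma>\<bar> ^ DIM(real^'n))))"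
    using lborel_affine[of \<sigma> x] s by simp
  also have "\<dots> = (\<integral>y. \<sigma> ^ CARD('n) * (f y * gauss \<sigma> (y - x)) \<partial>(distr lborel borel (\<lambda>z. x + \<sigma> *\<^sub>R z)))"
    using s by (subst integral_density) auto
  also have "\<dots> = (\<integral>z. \<sigma> ^ CARD('n) * (f (x + \<sigma> *\<^sub>R z) * gauss \<sigma> (\<sigma> *\<^sub>R z)) \<partial>lborel)"
    by (subst integral_distr) auto
  also have "\<dots> = (\<integral>z. gauss 1 z * f (x + \<sigma> *\<^sub>R z) \<partial>lborel)"
  proof (intro Bochner_Integration.integral_cong refl)
    fix z :: "real^'n"
    have "\<sigma> ^ CARD('n) * gauss \<sigma> (\<sigma> *\<^sub>R z) = gauss 1 z" by (rule gauss_scale[OF s])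
    then show "\<sigma> ^ CARD('n) * (f (x + \<sigma> *\<^sub>R z) * gauss \<sigma> (\<sigma> *\<^sub>R z)) = gauss 1 z * f (x + \<sigma> *\<^sub>R z)"
      by (metis mult.assoc mult.commute)
  qed
  also have "\<dots> = (\<integral>z. f (x + \<sigma> *\<^sub>R z) \<partial>stdN)"
    unfolding stdN_def by (subst integral_density) (auto simp: gauss_nonneg)
  finally show ?thesis .
qed



definition rk :: "('a::finite \<Rightarrow> 'b::linorder) \<Rightarrow> 'a \<Rightarrow> nat" where
  "rk f i = card {j. f j < f i}"

lemma rk_less: assumes "f i < f k" shows "rk f i < rk f k"
proof -
  have "{j. f j < f i} \<subset> {j. f j < f k}" using assms by auto
  then show ?thesis unfolding rk_def by (intro psubset_card_mono) auto
qed

lemma rk_bound: "rk f i < CARD('a)" for f :: "'a::finite \<Rightarrow> 'b::linorder"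
proof -
  have "{j. f j < f i} \<subset> UNIV" by auto
  then show ?thesis unfolding rk_def by (intro psubset_card_mono) auto
qed

lemma rk_inj: assumes "inj f" shows "inj (rk f)"
proof (rule injI)
  fix i k assume eq: "rk f i = rk f k"
  show "i = k"
  proof (rule ccontr)
    assume "i \<noteq> k"
    then have "f i \<noteq> f k" using assms by (auto dest: injD)
    then have "f i < f k \<or> f k < f i" by auto
    then show False using rk_less[of f i k] rk_less[of f k i] eq by auto
  qed
qed

lemma rk_bij: fixes f :: "'a::finite \<Rightarrow> 'b::linorder"
  assumes "inj f" shows "bij_betw (rk f) UNIV {..<CARD('a)}"
proof -
  have "rk f ` UNIV \<subseteq> {..<CARD('a)}" using rk_bound by auto
  moreover have "card (rk f ` UNIV) = CARD('a)"
    using card_image[OF rk_inj[OF assms]] by simp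
  ultimately have "rk f ` UNIV = {..<CARD('a)}"
    by (intro card_subset_eq) auto
  then show ?thesis using rk_inj[OF assms] by (simp add: bij_betw_def)
qed

lemma rk_mono_le: fixes i k :: "'a::{finite,linorder}" assumes "i \<le> k"
  shows "rk (id::'a\<Rightarrow>'a) i \<le> rk id k"
proof (cases "i < k")
  case True then show ?thesis using rk_less[of "id::'a\<Rightarrow>'a" i k] by simp
next
  case False then show ?thesis using assms by simp
qed

lemma sort_perm_exists:
  fixes f :: "'a::{finite,linorder} \<Rightarrow> 'b::linorder"
  assumes inj: "inj f"
  shows "\<exists>p. p permutes UNIV \<and> (\<forall>i j. i \<le> j \<longrightarrow> f (p i) \<le> f (p j))"
proof -
  have injid: "inj (id :: 'a \<Rightarrow> 'a)" by simp
  define p where "p k = inv_into UNIV (rk f) (rk (id::'a\<Rightarrow>'a) k)" for k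
  have range: "rk (id::'a\<Rightarrow>'a) k \<in> range (rk f)" for k
    using rk_bij[OF inj] rk_bound[of "id::'a\<Rightarrow>'a" k] by (auto simp: bij_betw_def)
  have rkp: "rk f (p k) = rk (id::'a\<Rightarrow>'a) k" for k
    unfolding p_def using range by (rule f_inv_into_f)
  have "inj p"
  proof (rule injI)
    fix k k' assume "p k = p k'"
    then have "rk (id::'a\<Rightarrow>'a) k = rk (id::'a\<Rightarrow>'a) k'" using rkp by metis
    then show "k = k'" using rk_inj[OF injid] by (auto dest: injD)
  qed
  then have "bij p" using finite_UNIV_inj_surj[of p] by (simp add: bij_def)
  then have perm: "p permutes UNIV" by (rule bij_imp_permutes) auto
  have "f (p i) \<le> f (p j)" if "i \<le> j" for i j
  proof (rule ccontr)
    assume "\<not> f (p i) \<le> f (p j)"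
    then have "f (p j) < f (p i)" by auto
    then have "rk (id::'a\<Rightarrow>'a) j < rk (id::'a\<Rightarrow>'a) i" using rk_less[of f "p j" "p i"] rkp by metis
    moreover have "rk (id::'a\<Rightarrow>'a) i \<le> rk (id::'a\<Rightarrow>'a) j" using rk_mono_le[OF that] .
    ultimately show False by simp
  qed
  with perm show ?thesis by blast
qed

lemma sort_perm_unique:
  fixes f :: "'a::{finite,linorder} \<Rightarrow> 'b::linorder"
  assumes inj: "inj f"
    and p: "p permutes UNIV" "\<forall>i j. i \<le> j \<longrightarrow> f (p i) \<le> f (p j)"
    and q: "q permutes UNIV" "\<forall>i j. i \<le> j \<longrightarrow> f (q i) \<le> f (q j)"
  shows "p = q"
proof -
  have key: "rk f (r k) = rk (id::'a\<Rightarrow>'a) k"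
    if r: "r permutes UNIV" "\<forall>i j. i \<le> j \<longrightarrow> f (r i) \<le> f (r j)" for r and k :: 'a
  proof -
    have injr: "inj r" using r(1) permutes_inj by blast
    have lt: "f (r j) < f (r k) \<longleftrightarrow> j < k" for j
    proof
      assume a: "f (r j) < f (r k)"
      show "j < k"
      proof (rule ccontr)
        assume "\<not> j < k" then have "k \<le> j" by auto
        then have "f (r k) \<le> f (r j)" using r(2) by blast
        with a show False by simp
      qed
    next
      assume a: "j < k"
      then have le: "f (r j) \<le> f (r k)" using r(2) by (auto simp: less_imp_le)
      have "j \<noteq> k" using a by simp
      then have "r j \<noteq> r k" using injr by (metis injD)
      then have "f (r j) \<noteq> f (r k)" using inj by (metis injD)
      with le show "f (r j) < f (r k)" by simp
    qed
    have "{j. f j < f (r k)} = r ` {j. f (r j) < f (r k)}"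
    proof -
      have "surj r" using r(1) permutes_surj by blast
      show ?thesis
      proof (intro equalityI subsetI)
        fix j assume "j \<in> {j. f j < f (r k)}"
        moreover have "j = r (inv r j)" using \<open>surj r\<close> by (simp add: surj_f_inv_f)
        ultimately show "j \<in> r ` {j. f (r j) < f (r k)}" by (metis (mono_tags, lifting) image_eqI mem_Collect_eq)
      qed auto
    qed
    then have "rk f (r k) = card (r ` {j. j < k})" unfolding rk_def lt by simp
    also have "\<dots> = card {j. j < k}" using injr by (simp add: card_image inj_on_subset)
    finally show ?thesis by (simp add: rk_def)
  qed
  show ?thesis
  proof
    fix k
    have "rk f (p k) = rk f (q k)" using key[OF p] key[OF q] by simp
    then show "p k = q k" using rk_inj[OF inj] by (auto dest: injD)
  qed
qed

lemma perm_vec_ascending_iff: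
  "perm_vec p x \<in> ascending \<longleftrightarrow> (\<forall>i j. i \<le> j \<longrightarrow> x $ p i \<le> x $ p j)"
  by (simp add: ascending_def perm_vec_def)

lemma sum_perm_indicator:
  fixes x :: "real ^ 'n::{finite,linorder}"
  assumes inj: "inj (\<lambda>i. x $ i)"
  shows "(\<Sum>p\<in>{p. p permutes (UNIV::'n set)}. indicator ascending (perm_vec p x) :: real) = 1"
proof -
  obtain p0 where p0: "p0 permutes UNIV" "\<forall>i j. i \<le> j \<longrightarrow> x $ p0 i \<le> x $ p0 j"
    using sort_perm_exists[OF inj] by blast
  have S: "p permutes UNIV \<Longrightarrow> indicator ascending (perm_vec p x) = (if p = p0 then 1 else (0::real))" for p
  proof -
    assume pp: "p permutes UNIV"
    show ?thesis
    proof (cases "perm_vec p x \<in> ascending")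
      case True
      then have "p = p0" using sort_perm_unique[OF inj pp _ p0] by (simp add: perm_vec_ascending_iff)
      then show ?thesis using True by simp
    next
      case False
      then have "p \<noteq> p0" using p0 by (auto simp: perm_vec_ascending_iff)
      then show ?thesis using False by simp
    qed
  qed
  have "(\<Sum>p\<in>{p. p permutes (UNIV::'n set)}. indicator ascending (perm_vec p x) :: real)
      = (\<Sum>p\<in>{p. p permutes (UNIV::'n set)}. if p = p0 then 1 else 0)"
    by (rule sum.cong) (auto simp: S)
  also have "\<dots> = 1" using p0(1) by (simp add: finite_permutations)
  finally show ?thesis .
qed





lemma ascending_closed: "closed (ascending :: (real^'n::{finite,linorder}) set)"
proof -
  have eq: "ascending = (\<Inter>i. \<Inter>j\<in>{j. i \<le> j}. {x::(real,'n) vec. x $ i \<le> x $ j})"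
    by (auto simp: ascending_def)
  have cl: "closed {x::(real,'n) vec. x $ i \<le> x $ j}" for i j
    by (intro closed_Collect_le linear_continuous_on bounded_linear_vec_nth)
  show ?thesis unfolding eq by (intro closed_INT ballI cl)
qed

lemma ascending_borel[measurable]: "ascending \<in> sets borel"
  using ascending_closed by (rule borel_closed)

locale TS = prob_space M for M :: "(real ^ 'n::{finite,linorder}) measure" +
  assumes SM: "sets M = sets borel" and EX: "exchangeable M"
    and L2: "\<And>k. integrable M (\<lambda>x. (x $ k)\<^sup>2)" and INJ: "AE x in M. inj (\<lambda>i. x $ i)"
begin

lemma sets_M[measurable_cong]: "sets M = sets borel" by (rule SM)

lemma space_M: "space M = UNIV"
  using sets_eq_imp_space_eq[OF SM] by simp

lemma integral_perm:
  fixes f :: "(real, 'n) vec \<Rightarrow> real"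
  assumes p: "p permutes UNIV" and f[measurable]: "f \<in> borel_measurable borel"
  shows "(\<integral>x. f (perm_vec p x) \<partial>M) = (\<integral>x. f x \<partial>M)"
proof -
  have "distr M borel (perm_vec p) = M" using EX p by (simp add: exchangeable_def)
  then have "(\<integral>x. f x \<partial>M) = (\<integral>x. f x \<partial>distr M borel (perm_vec p))" by simp
  also have "\<dots> = (\<integral>x. f (perm_vec p x) \<partial>M)"
    using integral_distr[of "perm_vec p" M borel f] by simp
  finally show ?thesis by simp
qed

lemma measure_perm:
  assumes p: "p permutes UNIV" and S[measurable]: "S \<in> sets borel"
  shows "prob (perm_vec p -` S) = prob S"
proof -
  have [measurable]: "perm_vec p -` S \<in> sets M"
    using measurable_sets[OF perm_vec_measurable S] by (simp add: SM)
  have "prob (perm_vec p -` S) = (\<integral>x. indicator (perm_vec p -` S) x \<partial>M)"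
    by simp
  also have "\<dots> = (\<integral>x. indicator S (perm_vec p x) \<partial>M)"
    by (simp add: indicator_vimage)
  also have "\<dots> = (\<integral>x. indicator S x \<partial>M)" by (rule integral_perm[OF p]) simp
  also have "\<dots> = prob S" by simp
  finally show ?thesis .
qed

lemma prob_ascending: "prob ascending = 1 / fact CARD('n)"
proof -
  have "(1::real) = (\<integral>x. 1 \<partial>M)" by (simp add: prob_space)
  also have "\<dots> = (\<integral>x. (\<Sum>p\<in>{p. p permutes (UNIV::'n set)}. indicator ascending (perm_vec p x)) \<partial>M)"
    by (intro integral_cong_AE) (use INJ sum_perm_indicator in auto)
  also have "\<dots> = (\<Sum>p\<in>{p. p permutes (UNIV::'n set)}. (\<integral>x. indicator ascending (perm_vec p x) \<partial>M))"
    by (subst Bochner_Integration.integral_sum) (auto intro!: integrable_const_bound[where B=1])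
  also have "\<dots> = (\<Sum>p\<in>{p. p permutes (UNIV::'n set)}. prob ascending)"
    by (intro sum.cong refl) (simp add: integral_perm)
  also have "\<dots> = fact CARD('n) * prob ascending"
    by (simp add: card_permutations)
  finally show ?thesis by (simp add: field_simps)
qed

lemma integrable_gauss_M: "0 < \<sigma> \<Longrightarrow> integrable M (\<lambda>x. gauss \<sigma> (y - x))"
  by (intro integrable_const_bound[where B="(1 / sqrt (2 * pi * \<sigma>\<^sup>2)) ^ CARD('n)"])
     (auto simp: gauss_nonneg gauss_bound)

lemma integrable_ind_gauss_M: "0 < \<sigma> \<Longrightarrow> B \<in> sets borel \<Longrightarrow> integrable M (\<lambda>x. indicator B x * gauss \<sigma> (y - x))"
  by (intro integrable_const_bound[where B="(1 / sqrt (2 * pi * \<sigma>\<^sup>2)) ^ CARD('n)"])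
     (auto simp: gauss_nonneg gauss_bound indicator_def)

lemma integral_gauss_M_pos: "0 < \<sigma> \<Longrightarrow> 0 < (\<integral>x. gauss \<sigma> (y - x) \<partial>M)"
proof -
  assume s: "0 < \<sigma>"
  have "0 \<le> (\<integral>x. gauss \<sigma> (y - x) \<partial>M)" by (simp add: gauss_nonneg)
  moreover have "(\<integral>x. gauss \<sigma> (y - x) \<partial>M) \<noteq> 0"
  proof
    assume "(\<integral>x. gauss \<sigma> (y - x) \<partial>M) = 0"
    then have "AE x in M. gauss \<sigma> (y - x) = 0"
      using integral_nonneg_eq_0_iff_AE[OF integrable_gauss_M[OF s]] by (simp add: gauss_nonneg)
    then have "AE x in M. False"
      by (rule AE_mp) (use gauss_pos[OF s] in \<open>auto intro!: AE_I2 simp: less_le\<close>)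
    then show False using AE_False emeasure_space_1 by simp
  qed
  ultimately show ?thesis by simp
qed

lemma post_prob_nonneg: "0 < \<sigma> \<Longrightarrow> 0 \<le> post_prob M \<sigma> B y"
  unfolding post_prob_def by (intro divide_nonneg_nonneg integral_nonneg) (auto simp: gauss_nonneg)

lemma post_prob_le1: assumes s: "0 < \<sigma>" and B[measurable]: "B \<in> sets borel" shows "post_prob M \<sigma> B y \<le> 1"
proof -
  have "(\<integral>x. indicator B x * gauss \<sigma> (y - x) \<partial>M) \<le> (\<integral>x. gauss \<sigma> (y - x) \<partial>M)"
    by (intro integral_mono integrable_gauss_M integrable_ind_gauss_M s B) (auto simp: indicator_def gauss_nonneg)
  then show ?thesis unfolding post_prob_def using integral_gauss_M_pos[OF s, of y]
    by (simp add: divide_le_eq_1)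
qed

lemma post_prob_measurable[measurable]:
  assumes B[measurable]: "B \<in> sets borel"
  shows "post_prob M \<sigma> B \<in> borel_measurable borel"
proof -
  have [measurable]: "(\<lambda>y. \<integral>x. indicator B x * gauss \<sigma> (y - x) \<partial>M) \<in> borel_measurable borel"
    by (rule borel_measurable_lebesgue_integral) simp
  have [measurable]: "(\<lambda>y. \<integral>x. gauss \<sigma> (y - x) \<partial>M) \<in> borel_measurable borel"
    by (rule borel_measurable_lebesgue_integral) simp
  show ?thesis unfolding post_prob_def[abs_def] by measurable
qed

lemma gfun_measurable[measurable]: "gfun M \<sigma> \<in> borel_measurable borel"
  unfolding gfun_def[abs_def] by measurable

lemma post_prob_perm:
  assumes p: "p permutes UNIV" and B[measurable]: "B \<in> sets borel"
  shows "post_prob M \<sigma> B (perm_vec p y) = post_prob M \<sigma> (perm_vec p -` B) y"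
proof -
  have 1: "(\<integral>x. indicator B x * gauss \<sigma> (perm_vec p y - x) \<partial>M) =
        (\<integral>x. indicator (perm_vec p -` B) x * gauss \<sigma> (y - x) \<partial>M)"
    by (subst integral_perm[OF p, symmetric])
       (simp_all add: perm_vec_diff[symmetric] gauss_perm[OF p] indicator_vimage)
  have 2: "(\<integral>x. gauss \<sigma> (perm_vec p y - x) \<partial>M) = (\<integral>x. gauss \<sigma> (y - x) \<partial>M)"
    by (subst integral_perm[OF p, symmetric])
       (simp_all add: perm_vec_diff[symmetric] gauss_perm[OF p])
  show ?thesis unfolding post_prob_def 1 2 ..
qed

end



lemma nn_integral_gauss_shift:
  assumes s: "0 < \<sigma>"
  shows "(\<integral>\<^sup>+y. ennreal (gauss \<sigma> (y - x :: real^'n::finite)) \<partial>lborel) = 1"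
proof -
  have "(\<integral>\<^sup>+y. ennreal (gauss \<sigma> (y - x)) \<partial>lborel) =
        (\<integral>\<^sup>+y. ennreal (gauss \<sigma> (y - x)) \<partial>distr lborel borel ((+) x))"
    by (simp add: lborel_distr_plus)
  also have "\<dots> = (\<integral>\<^sup>+y. ennreal (gauss \<sigma> (y::real^'n)) \<partial>lborel)"
    by (subst nn_integral_distr) auto
  also have "\<dots> = 1" by (rule nn_integral_gauss[OF s])
  finally show ?thesis .
qed

context TS begin

lemma pps: "pair_prob_space M (stdN :: (real, 'n) vec measure)"
  using prob_space_stdN prob_space_axioms
  by (simp add: pair_prob_space_def pair_sigma_finite_def prob_space_imp_sigma_finite
      prob_space_imp_sigma_finite[OF prob_space_stdN])

sublocale PS: pair_prob_space M "stdN :: (real, 'n) vec measure" by (rule pps)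

abbreviation "PP \<equiv> M \<Otimes>\<^sub>M (stdN :: (real, 'n) vec measure)"

lemma sets_PP[measurable_cong]: "sets PP = sets (borel \<Otimes>\<^sub>M borel)"
  by (intro sets_pair_measure_cong sets_M sets_stdN)

lemma integrable_PP_bound:
  fixes f :: "_ \<Rightarrow> real" and C :: real
  assumes [measurable]: "f \<in> borel_measurable (borel \<Otimes>\<^sub>M borel)"
    and "\<And>x z. \<bar>f (x, z)\<bar> \<le> C"
  shows "integrable PP f"
  using assms by (intro PS.P.integrable_const_bound[where B=C]) auto

lemma integrable_normsq: "integrable M (\<lambda>x. (norm x)\<^sup>2)"
proof -
  have "(norm x)\<^sup>2 = (\<Sum>k\<in>UNIV. (x $ k)\<^sup>2)" for x :: "(real, 'n) vec"
    by (simp add: norm_vec_def L2_set_def sum_nonneg)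
  then show ?thesis using L2 by (simp add: Bochner_Integration.integrable_sum)
qed

lemma integrable_PP_normsq: "integrable PP (\<lambda>(x, z). (norm x)\<^sup>2)"
proof -
  have "(\<integral>\<^sup>+p. ennreal (norm ((\<lambda>(x, z). (norm x)\<^sup>2) p)) \<partial>PP) =
      (\<integral>\<^sup>+x. (\<integral>\<^sup>+z. ennreal ((norm x)\<^sup>2) \<partial>(stdN :: (real, 'n) vec measure)) \<partial>M)"
    by (subst PS.M2.nn_integral_fst[symmetric]) (auto simp: case_prod_beta)
  also have "\<dots> = (\<integral>\<^sup>+x. ennreal ((norm x)\<^sup>2) \<partial>M)"
    by (intro nn_integral_cong) (simp add: prob_space.emeasure_space_1[OF prob_space_stdN])
  also have "\<dots> < \<infinity>"
    using integrable_normsq unfolding integrable_iff_bounded by simp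
  finally show ?thesis
    by (intro integrableI_bounded) (auto simp: case_prod_beta)
qed

lemma joint_exp_conv:
  fixes f :: "(real, 'n) vec \<Rightarrow> (real, 'n) vec \<Rightarrow> real"
  assumes s: "0 < \<sigma>" and f[measurable]: "(\<lambda>(x, y). f x y) \<in> borel_measurable (borel \<Otimes>\<^sub>M borel)"
    and int: "integrable PP (\<lambda>(x, z). f x (x + \<sigma> *\<^sub>R z))"
  shows "joint_exp M \<sigma> f = (\<integral>(x, z). f x (x + \<sigma> *\<^sub>R z) \<partial>PP)"
proof -
  have "joint_exp M \<sigma> f = (\<integral>x. (\<integral>z. f x (x + \<sigma> *\<^sub>R z) \<partial>stdN) \<partial>M)"
    unfolding joint_exp_def by (intro Bochner_Integration.integral_cong refl integral_gauss_subst s) measurable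
  also have "\<dots> = (\<integral>(x, z). f x (x + \<sigma> *\<^sub>R z) \<partial>PP)"
    using PS.integral_fst'[OF int] by simp
  finally show ?thesis .
qed

lemma integrable_Mlborel_gauss:
  assumes s: "0 < \<sigma>"
  shows "integrable (M \<Otimes>\<^sub>M lborel) (\<lambda>(x, y). gauss \<sigma> (y - x))"
proof -
  have "(\<integral>\<^sup>+p. ennreal (norm ((\<lambda>(x, y). gauss \<sigma> (y - x)) p)) \<partial>(M \<Otimes>\<^sub>M lborel)) =
      (\<integral>\<^sup>+x. (\<integral>\<^sup>+y. ennreal (gauss \<sigma> (y - x)) \<partial>lborel) \<partial>M)"
    by (subst lborel.nn_integral_fst[symmetric]) (auto simp: case_prod_beta gauss_nonneg)
  also have "\<dots> = 1"
    by (simp add: nn_integral_gauss_shift[OF s] emeasure_space_1)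
  finally show ?thesis
    by (intro integrableI_bounded) (auto simp: case_prod_beta)
qed

lemma projection:
  assumes s: "0 < \<sigma>" and B[measurable]: "B \<in> sets borel"
  shows "(\<integral>(x, z). (post_prob M \<sigma> B (x + \<sigma> *\<^sub>R z) - indicator B x)\<^sup>2 \<partial>PP)
       \<le> (\<integral>(x, z). (indicator B (x + \<sigma> *\<^sub>R z) - indicator B x)\<^sup>2 \<partial>PP)"
proof -
  define q where "q = post_prob M \<sigma> B"
  have q[measurable]: "q \<in> borel_measurable borel" unfolding q_def by measurable
  have q01: "0 \<le> q y" "q y \<le> 1" for y
    unfolding q_def using post_prob_nonneg[OF s] post_prob_le1[OF s B] by auto
  define f where "f x y = (indicator B y - q y) * (q y - indicator B x)" for x y :: "(real, 'n) vec"
  have f[measurable]: "(\<lambda>(x, y). f x y) \<in> borel_measurable (borel \<Otimes>\<^sub>M borel)"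
    unfolding f_def by measurable
  have fb: "\<bar>f x y\<bar> \<le> 1" for x y
    unfolding f_def using q01[of y] by (auto simp: indicator_def abs_mult intro: mult_le_one)
  have intf: "integrable PP (\<lambda>(x, z). f x (x + \<sigma> *\<^sub>R z))"
    by (rule integrable_PP_bound[where C=1]) (auto simp: fb)
  have intG: "integrable (M \<Otimes>\<^sub>M lborel) (\<lambda>(x, y). f x y * gauss \<sigma> (y - x))"
  proof (rule Bochner_Integration.integrable_bound[OF integrable_Mlborel_gauss[OF s]])
    show "(\<lambda>(x, y). f x y * gauss \<sigma> (y - x)) \<in> borel_measurable (M \<Otimes>\<^sub>M lborel)"
      by measurable
    show "AE p in M \<Otimes>\<^sub>M lborel. norm ((\<lambda>(x, y). f x y * gauss \<sigma> (y - x)) p) \<le> norm ((\<lambda>(x, y). gauss \<sigma> (y - x)) p)"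
    proof (intro AE_I2, clarify)
      fix x y
      show "norm (f x y * gauss \<sigma> (y - x)) \<le> norm (gauss \<sigma> (y - x))"
        using fb[of x y] by (simp add: abs_mult gauss_nonneg mult_left_le_one_le)
    qed
  qed
  have inner0: "(\<integral>x. f x y * gauss \<sigma> (y - x) \<partial>M) = 0" for y
  proof -
    have "(\<integral>x. f x y * gauss \<sigma> (y - x) \<partial>M) =
      (indicator B y - q y) * (q y * (\<integral>x. gauss \<sigma> (y - x) \<partial>M) - (\<integral>x. indicator B x * gauss \<sigma> (y - x) \<partial>M))"
    proof -
      have "(\<lambda>x. f x y * gauss \<sigma> (y - x)) = (\<lambda>x. (indicator B y - q y) *
          (q y * gauss \<sigma> (y - x) - indicator B x * gauss \<sigma> (y - x)))"
        by (auto simp: f_def algebra_simps)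
      then show ?thesis
        using integrable_gauss_M[OF s, of y] integrable_ind_gauss_M[OF s B, of y]
        by simp
    qed
    also have "q y * (\<integral>x. gauss \<sigma> (y - x) \<partial>M) = (\<integral>x. indicator B x * gauss \<sigma> (y - x) \<partial>M)"
      unfolding q_def post_prob_def using integral_gauss_M_pos[OF s, of y] by simp
    finally show ?thesis by simp
  qed
  have orth: "(\<integral>(x, z). f x (x + \<sigma> *\<^sub>R z) \<partial>PP) = 0"
  proof -
    interpret QL: pair_sigma_finite M "lborel :: (real, 'n) vec measure"
      by (simp add: pair_sigma_finite_def prob_space_imp_sigma_finite prob_space_axioms sigma_finite_lborel)
    have "(\<integral>(x, z). f x (x + \<sigma> *\<^sub>R z) \<partial>PP) = joint_exp M \<sigma> f"
      by (rule joint_exp_conv[OF s f intf, symmetric])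
    also have "\<dots> = (\<integral>(x, y). f x y * gauss \<sigma> (y - x) \<partial>(M \<Otimes>\<^sub>M lborel))"
      unfolding joint_exp_def using QL.integral_fst'[OF intG] by simp
    also have "\<dots> = (\<integral>y. (\<integral>x. f x y * gauss \<sigma> (y - x) \<partial>M) \<partial>lborel)"
      using QL.integral_snd[OF intG] by simp
    also have "\<dots> = 0" by (simp add: inner0)
    finally show ?thesis .
  qed
  let ?h = "\<lambda>(x, z). indicator B (x + \<sigma> *\<^sub>R z) :: real"
  let ?b = "\<lambda>(x, z). indicator B x :: real"
  let ?q = "\<lambda>(x, z). q (x + \<sigma> *\<^sub>R z)"
  have sq1: "\<bar>(a - b)\<^sup>2\<bar> \<le> 1" if "0 \<le> a" "a \<le> 1" "0 \<le> b" "b \<le> 1" for a b :: real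
    using that by (simp add: abs_square_le_1 abs_le_iff)
  have hq: "\<bar>(indicator B y - q y)\<^sup>2\<bar> \<le> 1" for y
    by (rule sq1) (simp_all add: q01 indicator_def)
  have qb: "\<bar>(q y - indicator B x)\<^sup>2\<bar> \<le> 1" for x y
    by (rule sq1) (simp_all add: q01 indicator_def)
  have i1: "integrable PP (\<lambda>p. (?h p - ?q p)\<^sup>2)"
    by (rule integrable_PP_bound[where C=1]) (measurable, simp only: case_prod_conv, rule hq)
  have i2: "integrable PP (\<lambda>p. (?q p - ?b p)\<^sup>2)"
    by (rule integrable_PP_bound[where C=1]) (measurable, simp only: case_prod_conv, rule qb)
  have i3: "integrable PP (\<lambda>p. 2 * (case p of (x, z) \<Rightarrow> f x (x + \<sigma> *\<^sub>R z)))"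
    using intf by simp
  have "(\<integral>p. (?h p - ?b p)\<^sup>2 \<partial>PP) = (\<integral>p. (?h p - ?q p)\<^sup>2 + 2 * (case p of (x, z) \<Rightarrow> f x (x + \<sigma> *\<^sub>R z)) + (?q p - ?b p)\<^sup>2 \<partial>PP)"
    by (intro Bochner_Integration.integral_cong refl) (auto simp: f_def power2_eq_square algebra_simps)
  also have "\<dots> = (\<integral>p. (?h p - ?q p)\<^sup>2 \<partial>PP) + 2 * (\<integral>(x, z). f x (x + \<sigma> *\<^sub>R z) \<partial>PP) + (\<integral>p. (?q p - ?b p)\<^sup>2 \<partial>PP)"
    using i1 i2 i3 by simp
  also have "\<dots> \<ge> (\<integral>p. (?q p - ?b p)\<^sup>2 \<partial>PP)"
    unfolding orth by (simp add: integral_nonneg)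
  finally show ?thesis by (simp add: q_def case_prod_beta')
qed

end



lemma abs_le_delta: "\<bar>d\<bar> \<le> \<delta> + d\<^sup>2 / \<delta>" if "0 < \<delta>" for d \<delta> :: real
proof (cases "\<bar>d\<bar> \<le> \<delta>")
  case True then show ?thesis using that by (simp add: add_increasing2)
next
  case False
  then have "\<bar>d\<bar> * \<delta> \<le> \<bar>d\<bar> * \<bar>d\<bar>" using that by (intro mult_left_mono) auto
  then have "\<bar>d\<bar> \<le> d\<^sup>2 / \<delta>" using that by (simp add: field_simps power2_eq_square abs_mult_self_eq)
  then show ?thesis using that by simp
qed

lemma weighted_pointwise:
  fixes W d K \<delta> :: real
  assumes "0 \<le> W" "\<bar>d\<bar> \<le> 1" "0 \<le> K" "0 < \<delta>"
  shows "W * \<bar>d\<bar> \<le> W * indicator {K<..} W + (K * \<delta> + K / \<delta> * d\<^sup>2)"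
proof (cases "K < W")
  case True
  have "W * \<bar>d\<bar> \<le> W" using assms by (simp add: mult_left_le)
  moreover have "0 \<le> K * \<delta> + K / \<delta> * d\<^sup>2" using assms by simp
  ultimately show ?thesis using True by simp
next
  case False
  have "W * \<bar>d\<bar> \<le> K * \<bar>d\<bar>" using False assms by (intro mult_right_mono) auto
  also have "\<dots> \<le> K * (\<delta> + d\<^sup>2 / \<delta>)" using abs_le_delta[OF assms(4)] assms by (intro mult_left_mono) auto
  also have "\<dots> = K * \<delta> + K / \<delta> * d\<^sup>2" by (simp add: algebra_simps)
  finally show ?thesis using False by simp
qed

lemma weighted_L1:
  fixes Q :: "'a measure" and W :: "'a \<Rightarrow> real" and d :: "'b \<Rightarrow> 'a \<Rightarrow> real"
  assumes Q: "prob_space Q" and W: "integrable Q W" "\<And>\<omega>. 0 \<le> W \<omega>"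
    and dm: "\<And>t. d t \<in> borel_measurable Q" and db: "\<And>t \<omega>. \<bar>d t \<omega>\<bar> \<le> 1"
    and lim: "((\<lambda>t. \<integral>\<omega>. (d t \<omega>)\<^sup>2 \<partial>Q) \<longlongrightarrow> 0) F"
  shows "((\<lambda>t. \<integral>\<omega>. W \<omega> * \<bar>d t \<omega>\<bar> \<partial>Q) \<longlongrightarrow> 0) F"
proof (rule order_tendstoI)
  interpret Q: prob_space Q by (rule Q)
  have Wm[measurable]: "W \<in> borel_measurable Q" using W(1) by auto
  have [measurable]: "d t \<in> borel_measurable Q" for t by (rule dm)
  have intWd: "integrable Q (\<lambda>\<omega>. W \<omega> * \<bar>d t \<omega>\<bar>)" for t
    by (rule Bochner_Integration.integrable_bound[OF W(1)]) (auto simp: abs_mult W(2) db mult_left_le)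
  have intd2: "integrable Q (\<lambda>\<omega>. (d t \<omega>)\<^sup>2)" for t
    by (rule Q.integrable_const_bound[where B=1]) (auto simp: abs_square_le_1 db)
  have intWK: "integrable Q (\<lambda>\<omega>. W \<omega> * indicator {K<..} (W \<omega>))" for K :: real
    by (rule Bochner_Integration.integrable_bound[OF W(1)]) (auto simp: W(2) indicator_def)
  fix a :: real
  show "a < 0 \<Longrightarrow> eventually (\<lambda>t. a < (\<integral>\<omega>. W \<omega> * \<bar>d t \<omega>\<bar> \<partial>Q)) F"
    by (intro always_eventually allI, rule less_le_trans[of _ 0])
       (auto intro!: integral_nonneg simp: W(2))
  assume a: "0 < a"
  have tail: "(\<lambda>k::nat. \<integral>\<omega>. W \<omega> * indicator {real k<..} (W \<omega>) \<partial>Q) \<longlonglongrightarrow> (\<integral>\<omega>. 0 \<partial>Q)"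
  proof (rule integral_dominated_convergence[where w=W])
    show "AE \<omega> in Q. (\<lambda>k. W \<omega> * indicator {real k<..} (W \<omega>)) \<longlonglongrightarrow> 0"
    proof (intro AE_I2)
      fix \<omega>
      obtain N :: nat where "W \<omega> < real N" using reals_Archimedean2 by blast
      then have "eventually (\<lambda>k. W \<omega> * indicator {real k<..} (W \<omega>) = 0) sequentially"
        unfolding eventually_sequentially
        by (intro exI[of _ N]) (auto simp: indicator_def)
      then show "(\<lambda>k. W \<omega> * indicator {real k<..} (W \<omega>)) \<longlonglongrightarrow> 0"
        by (rule tendsto_eventually)
    qed
  qed (auto simp: W indicator_def)
  then have "eventually (\<lambda>k::nat. (\<integral>\<omega>. W \<omega> * indicator {real k<..} (W \<omega>) \<partial>Q) < a / 3) sequentially"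
    using a by (intro order_tendstoD(2)) auto
  then obtain K :: nat where K: "(\<integral>\<omega>. W \<omega> * indicator {real K<..} (W \<omega>) \<partial>Q) < a / 3"
    unfolding eventually_sequentially by blast
  define K' where "K' = real K"
  define \<delta> where "\<delta> = a / (3 * (K' + 1))"
  have K'0: "0 \<le> K'" unfolding K'_def by simp
  have \<delta>0: "0 < \<delta>" unfolding \<delta>_def using a K'0 by simp
  have "eventually (\<lambda>t. (\<integral>\<omega>. (d t \<omega>)\<^sup>2 \<partial>Q) < \<delta> * \<delta>) F"
    using \<delta>0 by (intro order_tendstoD(2)[OF lim]) auto
  then show "eventually (\<lambda>t. (\<integral>\<omega>. W \<omega> * \<bar>d t \<omega>\<bar> \<partial>Q) < a) F"
  proof (rule eventually_mono)
    fix t assume t: "(\<integral>\<omega>. (d t \<omega>)\<^sup>2 \<partial>Q) < \<delta> * \<delta>"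
    have "(\<integral>\<omega>. W \<omega> * \<bar>d t \<omega>\<bar> \<partial>Q) \<le>
        (\<integral>\<omega>. W \<omega> * indicator {K'<..} (W \<omega>) + (K' * \<delta> + K' / \<delta> * (d t \<omega>)\<^sup>2) \<partial>Q)"
    proof (rule integral_mono[OF intWd])
      show "integrable Q (\<lambda>\<omega>. W \<omega> * indicator {K'<..} (W \<omega>) + (K' * \<delta> + K' / \<delta> * (d t \<omega>)\<^sup>2))"
        using intWK intd2 by simp
    qed (rule weighted_pointwise[OF W(2) db K'0 \<delta>0])
    also have "\<dots> = (\<integral>\<omega>. W \<omega> * indicator {K'<..} (W \<omega>) \<partial>Q) + K' * \<delta> + K' / \<delta> * (\<integral>\<omega>. (d t \<omega>)\<^sup>2 \<partial>Q)"
      using intWK intd2 by (simp add: Q.prob_space)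
    also have "\<dots> < a / 3 + a / 3 + a / 3"
    proof -
      have 1: "K' * \<delta> \<le> a / 3"
        unfolding \<delta>_def using a K'0 by (simp add: field_simps)
      have "K' / \<delta> * (\<integral>\<omega>. (d t \<omega>)\<^sup>2 \<partial>Q) \<le> K' / \<delta> * (\<delta> * \<delta>)"
        using t K'0 \<delta>0 by (intro mult_left_mono) auto
      also have "\<dots> = K' * \<delta>" using \<delta>0 by (simp add: field_simps)
      finally have 2: "K' / \<delta> * (\<integral>\<omega>. (d t \<omega>)\<^sup>2 \<partial>Q) \<le> a / 3" using 1 by linarith
      have K2: "(\<integral>\<omega>. W \<omega> * indicator {K'<..} (W \<omega>) \<partial>Q) < a / 3" using K unfolding K'_def .
      show ?thesis using K2 1 2 by linarith
    qed
    finally show "(\<integral>\<omega>. W \<omega> * \<bar>d t \<omega>\<bar> \<partial>Q) < a" by simp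
  qed
qed

lemma pred_inj[measurable]: "Measurable.pred borel (\<lambda>x::(real, 'n::finite) vec. inj (\<lambda>i. x $ i))"
proof -
  have eq: "{x::(real, 'n) vec. inj (\<lambda>i. x $ i)} = (\<Inter>i. \<Inter>j\<in>{j. j \<noteq> i}. {x. x $ i \<noteq> x $ j})"
    by (auto simp: inj_def)
  have "open {x::(real, 'n) vec. x $ i \<noteq> x $ j}" for i j
    by (intro open_Collect_neq linear_continuous_on bounded_linear_vec_nth)
  then have "open {x::(real, 'n) vec. inj (\<lambda>i. x $ i)}"
    unfolding eq by (intro open_INT ballI) auto
  then show ?thesis unfolding pred_def by (simp add: borel_open)
qed

lemma ind_perm_eventually:
  fixes x :: "(real, 'n::{finite,linorder}) vec" and Y :: "'a \<Rightarrow> (real, 'n) vec"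
  assumes inj: "inj (\<lambda>i. x $ i)" and Y: "(Y \<longlongrightarrow> x) F"
  shows "eventually (\<lambda>t. indicator (perm_vec p -` ascending) (Y t) = (indicator (perm_vec p -` ascending) x :: real)) F"
proof -
  have "eventually (\<lambda>t. \<forall>i j. (Y t $ p i \<le> Y t $ p j) = (x $ p i \<le> x $ p j)) F"
  proof (intro eventually_all_finite)
    fix i j
    have cY: "((\<lambda>t. Y t $ p j - Y t $ p i) \<longlongrightarrow> x $ p j - x $ p i) F"
      by (intro tendsto_intros tendsto_vec_nth Y)
    consider "x $ p i < x $ p j" | "x $ p j < x $ p i" | "p i = p j"
      using inj by (metis injD linorder_neqE_linordered_idom)
    then show "eventually (\<lambda>t. (Y t $ p i \<le> Y t $ p j) = (x $ p i \<le> x $ p j)) F"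
    proof cases
      case 1
      then have "eventually (\<lambda>t. 0 < Y t $ p j - Y t $ p i) F" by (intro order_tendstoD(1)[OF cY]) auto
      then show ?thesis by eventually_elim (use 1 in auto)
    next
      case 2
      then have "eventually (\<lambda>t. Y t $ p j - Y t $ p i < 0) F" by (intro order_tendstoD(2)[OF cY]) auto
      then show ?thesis by eventually_elim (use 2 in auto)
    qed simp
  qed
  then show ?thesis
    by eventually_elim (simp add: indicator_def perm_vec_ascending_iff)
qed




lemma perm_vec_id_vimage[simp]: "perm_vec id -` S = S"
  by (auto simp: perm_vec_def vec_eq_iff)

context TS begin

lemma Ap_borel[measurable]: "perm_vec p -` ascending \<in> sets borel"
  using measurable_sets[OF perm_vec_measurable ascending_borel, of p] by simp

lemma integral_PP_fst:
  fixes g :: "(real, 'n) vec \<Rightarrow> real"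
  assumes [measurable]: "g \<in> borel_measurable borel"
  shows "(\<integral>\<omega>. g (fst \<omega>) \<partial>PP) = (\<integral>x. g x \<partial>M)"
proof -
  have "distr PP M fst = M" by (rule prob_space.distr_pair_fst[OF prob_space_stdN])
  then have "(\<integral>x. g x \<partial>M) = (\<integral>x. g x \<partial>distr PP M fst)" by simp
  also have "\<dots> = (\<integral>\<omega>. g (fst \<omega>) \<partial>PP)" by (subst integral_distr) auto
  finally show ?thesis by simp
qed

lemma AE_PP_inj: "AE \<omega> in PP. inj (\<lambda>i. fst \<omega> $ i)"
proof (rule PS.AE_pair_measure)
  show "{\<omega> \<in> space PP. inj (\<lambda>i. fst \<omega> $ i)} \<in> sets PP" by measurable
  show "AE x in M. AE z in stdN. inj (\<lambda>i. fst (x, z) $ i)"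
    by (rule AE_mp[OF INJ]) (auto intro!: AE_I2)
qed

lemma gfun_bounds: assumes "0 < \<sigma>" shows "0 \<le> gfun M \<sigma> y" "gfun M \<sigma> y \<le> 1"
  using post_prob_nonneg[OF assms, of ascending y] post_prob_le1[OF assms ascending_borel, of y]
  unfolding gfun_def by (auto intro!: mult_nonneg_nonneg mult_le_one)

lemma gfun_perm: "p permutes UNIV \<Longrightarrow> gfun M \<sigma> (perm_vec p y) =
   post_prob M \<sigma> (perm_vec p -` ascending) y * (1 - post_prob M \<sigma> (perm_vec p -` ascending) y)"
  unfolding gfun_def by (simp add: post_prob_perm)

lemma qb_le: "q * (1 - q) \<le> \<bar>q - indicator S x\<bar>" if "0 \<le> q" "q \<le> 1" for q :: real
proof (cases "x \<in> S")
  case True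
  have "q * (1 - q) \<le> 1 - q" using that by (intro mult_left_le_one_le) auto
  then show ?thesis using True that by simp
next
  case False
  have "q * (1 - q) \<le> q" using that by (intro mult_right_le_one_le) auto
  then show ?thesis using False that by simp
qed

lemma Tp_conv:
  assumes s: "0 < \<sigma>"
  shows "joint_exp M \<sigma> (\<lambda>x y. indicator ascending y * (norm x)\<^sup>2 * gfun M \<sigma> (perm_vec p y)) =
    (\<integral>(x, z). indicator ascending (x + \<sigma> *\<^sub>R z) * (norm x)\<^sup>2 * gfun M \<sigma> (perm_vec p (x + \<sigma> *\<^sub>R z)) \<partial>PP)"
proof (rule joint_exp_conv[OF s])
  show "integrable PP (\<lambda>(x, z). indicator ascending (x + \<sigma> *\<^sub>R z) * (norm x)\<^sup>2 * gfun M \<sigma> (perm_vec p (x + \<sigma> *\<^sub>R z)))"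
  proof (rule Bochner_Integration.integrable_bound[OF integrable_PP_normsq])
    show "AE \<omega> in PP. norm ((\<lambda>(x, z). indicator ascending (x + \<sigma> *\<^sub>R z) * (norm x)\<^sup>2 * gfun M \<sigma> (perm_vec p (x + \<sigma> *\<^sub>R z))) \<omega>)
       \<le> norm ((\<lambda>(x, z). (norm x)\<^sup>2) \<omega>)"
    proof (intro AE_I2, clarify)
      fix x z :: "(real, 'n) vec"
      have "indicator ascending (x + \<sigma> *\<^sub>R z) * gfun M \<sigma> (perm_vec p (x + \<sigma> *\<^sub>R z)) \<le> (1::real)"
        using gfun_bounds[OF s] by (auto simp: indicator_def)
      moreover have "0 \<le> indicator ascending (x + \<sigma> *\<^sub>R z) * gfun M \<sigma> (perm_vec p (x + \<sigma> *\<^sub>R z))"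
        using gfun_bounds[OF s] by auto
      ultimately show "norm (indicator ascending (x + \<sigma> *\<^sub>R z) * (norm x)\<^sup>2 * gfun M \<sigma> (perm_vec p (x + \<sigma> *\<^sub>R z)))
       \<le> norm ((norm x)\<^sup>2)"
        by (simp add: abs_mult mult_left_le mult.commute mult.left_commute)
    qed
  qed measurable
qed measurable

lemma Dn_conv:
  assumes s: "0 < \<sigma>"
  shows "joint_exp M \<sigma> (\<lambda>x y. indicator ascending y) = (\<integral>(x, z). indicator ascending (x + \<sigma> *\<^sub>R z) \<partial>PP)"
  by (rule joint_exp_conv[OF s]) (auto intro!: integrable_PP_bound[where C=1] simp: indicator_def)

lemma lim_ind_sq:
  assumes p: "p permutes UNIV"
  shows "((\<lambda>t. \<integral>\<omega>. (indicator (perm_vec p -` ascending) (fst \<omega> + inverse t *\<^sub>R snd \<omega>)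
        - indicator (perm_vec p -` ascending) (fst \<omega>) :: real)\<^sup>2 \<partial>PP) \<longlongrightarrow> 0) at_top"
proof -
  have "((\<lambda>t. \<integral>\<omega>. (indicator (perm_vec p -` ascending) (fst \<omega> + inverse t *\<^sub>R snd \<omega>)
        - indicator (perm_vec p -` ascending) (fst \<omega>) :: real)\<^sup>2 \<partial>PP) \<longlongrightarrow> (\<integral>\<omega>. 0 \<partial>PP)) at_top"
  proof (rule integral_dominated_convergence_at_top[where w="\<lambda>_. 1"])
    show "AE \<omega> in PP. ((\<lambda>t. (indicator (perm_vec p -` ascending) (fst \<omega> + inverse t *\<^sub>R snd \<omega>)
        - indicator (perm_vec p -` ascending) (fst \<omega>) :: real)\<^sup>2) \<longlongrightarrow> 0) at_top"
      using AE_PP_inj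
    proof eventually_elim
      fix \<omega> :: "(real, 'n) vec \<times> (real, 'n) vec" assume inj: "inj (\<lambda>i. fst \<omega> $ i)"
      have "((\<lambda>t. fst \<omega> + inverse t *\<^sub>R snd \<omega>) \<longlongrightarrow> fst \<omega> + 0 *\<^sub>R snd \<omega>) at_top"
        by (intro tendsto_intros tendsto_inverse_0_at_top filterlim_ident)
      then have "((\<lambda>t. fst \<omega> + inverse t *\<^sub>R snd \<omega>) \<longlongrightarrow> fst \<omega>) at_top" by simp
      from ind_perm_eventually[OF inj this, of p]
      have "eventually (\<lambda>t. (indicator (perm_vec p -` ascending) (fst \<omega> + inverse t *\<^sub>R snd \<omega>)
        - indicator (perm_vec p -` ascending) (fst \<omega>) :: real)\<^sup>2 = 0) at_top"
        by eventually_elim simp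
      then show "((\<lambda>t. (indicator (perm_vec p -` ascending) (fst \<omega> + inverse t *\<^sub>R snd \<omega>)
        - indicator (perm_vec p -` ascending) (fst \<omega>) :: real)\<^sup>2) \<longlongrightarrow> 0) at_top"
        by (rule tendsto_eventually)
    qed
    show "\<forall>\<^sub>F t in at_top. AE \<omega> in PP. norm ((indicator (perm_vec p -` ascending) (fst \<omega> + inverse t *\<^sub>R snd \<omega>)
        - indicator (perm_vec p -` ascending) (fst \<omega>) :: real)\<^sup>2) \<le> 1"
      by (intro always_eventually allI AE_I2) (auto simp: indicator_def)
  qed auto
  then show ?thesis by simp
qed

lemma lim_Dn0:
  "((\<lambda>t. joint_exp M (inverse t) (\<lambda>x y. indicator ascending y)) \<longlongrightarrow> prob ascending) at_top"
proof -
  have ev: "eventually (\<lambda>t. joint_exp M (inverse t) (\<lambda>x y. indicator ascending y) =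
     (\<integral>\<omega>. indicator ascending (fst \<omega> + inverse t *\<^sub>R snd \<omega>) \<partial>PP)) at_top"
    using eventually_gt_at_top[of 0]
    by eventually_elim (simp add: Dn_conv case_prod_beta')
  have "((\<lambda>t. \<integral>\<omega>. indicator ascending (fst \<omega> + inverse t *\<^sub>R snd \<omega>) \<partial>PP) \<longlongrightarrow>
         ((\<integral>\<omega>. indicator ascending (fst \<omega>) \<partial>PP) :: real)) at_top"
  proof (rule integral_dominated_convergence_at_top[where w="\<lambda>_. 1"])
    show "AE \<omega> in PP. ((\<lambda>t. indicator ascending (fst \<omega> + inverse t *\<^sub>R snd \<omega>) :: real) \<longlongrightarrow> indicator ascending (fst \<omega>)) at_top"
      using AE_PP_inj
    proof eventually_elim
      fix \<omega> :: "(real, 'n) vec \<times> (real, 'n) vec" assume inj: "inj (\<lambda>i. fst \<omega> $ i)"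
      have "((\<lambda>t. fst \<omega> + inverse t *\<^sub>R snd \<omega>) \<longlongrightarrow> fst \<omega> + 0 *\<^sub>R snd \<omega>) at_top"
        by (intro tendsto_intros tendsto_inverse_0_at_top filterlim_ident)
      then have "((\<lambda>t. fst \<omega> + inverse t *\<^sub>R snd \<omega>) \<longlongrightarrow> fst \<omega>) at_top" by simp
      from ind_perm_eventually[OF inj this, of id]
      show "((\<lambda>t. indicator ascending (fst \<omega> + inverse t *\<^sub>R snd \<omega>) :: real) \<longlongrightarrow> indicator ascending (fst \<omega>)) at_top"
        by (intro tendsto_eventually) (simp add: perm_vec_def)
    qed
    show "\<forall>\<^sub>F t in at_top. AE \<omega> in PP. norm (indicator ascending (fst \<omega> + inverse t *\<^sub>R snd \<omega>) :: real) \<le> 1"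
      by (intro always_eventually allI AE_I2) (auto simp: indicator_def)
  qed auto
  also have "(\<integral>\<omega>. indicator ascending (fst \<omega>) \<partial>PP) = prob ascending"
    by (subst integral_PP_fst) auto
  finally have lim: "((\<lambda>t. \<integral>\<omega>. indicator ascending (fst \<omega> + inverse t *\<^sub>R snd \<omega>) \<partial>PP) \<longlongrightarrow> prob ascending) at_top" .
  show ?thesis using tendsto_cong[OF ev] lim by blast
qed

end



context TS begin

lemma int_Tp:
  assumes s: "0 < \<sigma>"
  shows "integrable PP (\<lambda>\<omega>. indicator ascending (fst \<omega> + \<sigma> *\<^sub>R snd \<omega>) * (norm (fst \<omega>))\<^sup>2 * gfun M \<sigma> (perm_vec p (fst \<omega> + \<sigma> *\<^sub>R snd \<omega>)))"
proof (rule Bochner_Integration.integrable_bound[OF integrable_PP_normsq])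
  show "AE \<omega> in PP. norm (indicator ascending (fst \<omega> + \<sigma> *\<^sub>R snd \<omega>) * (norm (fst \<omega>))\<^sup>2 * gfun M \<sigma> (perm_vec p (fst \<omega> + \<sigma> *\<^sub>R snd \<omega>)))
       \<le> norm ((\<lambda>(x, z). (norm x)\<^sup>2) \<omega>)"
  proof (intro AE_I2)
    fix \<omega> :: "(real, 'n) vec \<times> (real, 'n) vec"
    obtain x z where \<omega>: "\<omega> = (x, z)" by (cases \<omega>)
    have "indicator ascending (x + \<sigma> *\<^sub>R z) * gfun M \<sigma> (perm_vec p (x + \<sigma> *\<^sub>R z)) \<le> (1::real)"
      using gfun_bounds[OF s] by (auto simp: indicator_def)
    moreover have "0 \<le> indicator ascending (x + \<sigma> *\<^sub>R z) * gfun M \<sigma> (perm_vec p (x + \<sigma> *\<^sub>R z))"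
      using gfun_bounds[OF s] by auto
    ultimately show "norm (indicator ascending (fst \<omega> + \<sigma> *\<^sub>R snd \<omega>) * (norm (fst \<omega>))\<^sup>2 * gfun M \<sigma> (perm_vec p (fst \<omega> + \<sigma> *\<^sub>R snd \<omega>)))
       \<le> norm ((\<lambda>(x, z). (norm x)\<^sup>2) \<omega>)"
      unfolding \<omega> by (simp add: abs_mult mult_left_le mult.commute mult.left_commute)
  qed
qed measurable

lemma prob_PP: "prob_space PP"
  by (rule PS.P.prob_space_axioms)

lemma lim_Tp0:
  assumes p: "p permutes UNIV"
  shows "((\<lambda>t. joint_exp M (inverse t) (\<lambda>x y. indicator ascending y * (norm x)\<^sup>2 * gfun M (inverse t) (perm_vec p y))) \<longlongrightarrow> 0) at_top"
proof -
  define B where "B = perm_vec p -` ascending"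
  have B[measurable]: "B \<in> sets borel" unfolding B_def by measurable
  define d where "d t \<omega> = (if 0 < t then post_prob M (inverse t) B (fst \<omega> + inverse t *\<^sub>R snd \<omega>) - indicator B (fst \<omega>) else 0)"
    for t :: real and \<omega> :: "(real, 'n) vec \<times> (real, 'n) vec"
  have dm: "d t \<in> borel_measurable PP" for t
  proof (cases "0 < t")
    case True
    then have "d t = (\<lambda>\<omega>. post_prob M (inverse t) B (fst \<omega> + inverse t *\<^sub>R snd \<omega>) - indicator B (fst \<omega>))"
      by (auto simp: d_def fun_eq_iff)
    then show ?thesis by (simp only:) measurable
  next
    case False
    then have "d t = (\<lambda>\<omega>. 0)" by (auto simp: d_def fun_eq_iff)
    then show ?thesis by simp
  qed
  have db: "\<bar>d t \<omega>\<bar> \<le> 1" for t \<omega>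
  proof (cases "0 < t")
    case True
    then have s: "0 < inverse t" by simp
    define q where "q = post_prob M (inverse t) B (fst \<omega> + inverse t *\<^sub>R snd \<omega>)"
    have q01: "0 \<le> q" "q \<le> 1" unfolding q_def using post_prob_nonneg[OF s] post_prob_le1[OF s B] by auto
    have "d t \<omega> = q - indicator B (fst \<omega>)" using True by (simp add: d_def q_def)
    then show ?thesis using q01 by (auto simp: indicator_def)
  qed (simp add: d_def)
  have W: "integrable PP (\<lambda>\<omega>. (norm (fst \<omega>))\<^sup>2)"
    using integrable_PP_normsq by (simp add: case_prod_beta')
  have d2: "((\<lambda>t. \<integral>\<omega>. (d t \<omega>)\<^sup>2 \<partial>PP) \<longlongrightarrow> 0) at_top"
  proof (rule tendsto_sandwich[OF _ _ tendsto_const lim_ind_sq[OF p]])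
    show "\<forall>\<^sub>F t in at_top. 0 \<le> (\<integral>\<omega>. (d t \<omega>)\<^sup>2 \<partial>PP)"
      by (intro always_eventually allI Bochner_Integration.integral_nonneg) auto
    show "\<forall>\<^sub>F t in at_top. (\<integral>\<omega>. (d t \<omega>)\<^sup>2 \<partial>PP) \<le> (\<integral>\<omega>. (indicator (perm_vec p -` ascending) (fst \<omega> + inverse t *\<^sub>R snd \<omega>)
        - indicator (perm_vec p -` ascending) (fst \<omega>) :: real)\<^sup>2 \<partial>PP)"
      using eventually_gt_at_top[of 0]
    proof eventually_elim
      case (elim t)
      then have s: "0 < inverse t" by simp
      from projection[OF s B] elim show ?case
        by (simp add: d_def B_def case_prod_beta')
    qed
  qed
  have wl: "((\<lambda>t. \<integral>\<omega>. (norm (fst \<omega>))\<^sup>2 * \<bar>d t \<omega>\<bar> \<partial>PP) \<longlongrightarrow> 0) at_top"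
    by (rule weighted_L1[OF prob_PP W _ dm db d2]) simp
  show ?thesis
  proof (rule tendsto_sandwich[OF _ _ tendsto_const wl])
    show "\<forall>\<^sub>F t in at_top. 0 \<le> joint_exp M (inverse t) (\<lambda>x y. indicator ascending y * (norm x)\<^sup>2 * gfun M (inverse t) (perm_vec p y))"
      using eventually_gt_at_top[of 0]
    proof eventually_elim
      case (elim t)
      then have s: "0 < inverse t" by simp
      show ?case unfolding Tp_conv[OF s]
        by (intro Bochner_Integration.integral_nonneg) (auto intro!: mult_nonneg_nonneg gfun_bounds[OF s])
    qed
    show "\<forall>\<^sub>F t in at_top. joint_exp M (inverse t) (\<lambda>x y. indicator ascending y * (norm x)\<^sup>2 * gfun M (inverse t) (perm_vec p y))
       \<le> (\<integral>\<omega>. (norm (fst \<omega>))\<^sup>2 * \<bar>d t \<omega>\<bar> \<partial>PP)"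
      using eventually_gt_at_top[of 0]
    proof eventually_elim
      case (elim t)
      then have s: "0 < inverse t" by simp
      have "joint_exp M (inverse t) (\<lambda>x y. indicator ascending y * (norm x)\<^sup>2 * gfun M (inverse t) (perm_vec p y))
          = (\<integral>\<omega>. indicator ascending (fst \<omega> + inverse t *\<^sub>R snd \<omega>) * (norm (fst \<omega>))\<^sup>2 * gfun M (inverse t) (perm_vec p (fst \<omega> + inverse t *\<^sub>R snd \<omega>)) \<partial>PP)"
        unfolding Tp_conv[OF s] by (simp add: case_prod_beta')
      also have "\<dots> \<le> (\<integral>\<omega>. (norm (fst \<omega>))\<^sup>2 * \<bar>d t \<omega>\<bar> \<partial>PP)"
      proof (rule integral_mono[OF int_Tp[OF s]])
        show "integrable PP (\<lambda>\<omega>. (norm (fst \<omega>))\<^sup>2 * \<bar>d t \<omega>\<bar>)"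
        proof (rule Bochner_Integration.integrable_bound[OF W])
          have [measurable]: "d t \<in> borel_measurable PP" by (rule dm)
          show "(\<lambda>\<omega>. (norm (fst \<omega>))\<^sup>2 * \<bar>d t \<omega>\<bar>) \<in> borel_measurable PP" by measurable
        qed (auto simp: abs_mult db mult_left_le)
        fix \<omega> :: "(real, 'n) vec \<times> (real, 'n) vec"
        define y where "y = fst \<omega> + inverse t *\<^sub>R snd \<omega>"
        define q where "q = post_prob M (inverse t) B y"
        have q01: "0 \<le> q" "q \<le> 1" unfolding q_def using post_prob_nonneg[OF s] post_prob_le1[OF s B] by auto
        have g: "gfun M (inverse t) (perm_vec p y) = q * (1 - q)"
          unfolding q_def B_def by (rule gfun_perm[OF p])
        have dq: "d t \<omega> = q - indicator B (fst \<omega>)"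
          using elim by (simp add: d_def q_def y_def)
        have "indicator ascending y * gfun M (inverse t) (perm_vec p y) \<le> \<bar>d t \<omega>\<bar>"
        proof -
          have "indicator ascending y * gfun M (inverse t) (perm_vec p y) \<le> gfun M (inverse t) (perm_vec p y)"
            using gfun_bounds[OF s] by (auto simp: indicator_def)
          also have "\<dots> \<le> \<bar>d t \<omega>\<bar>" unfolding g dq by (rule qb_le[OF q01])
          finally show ?thesis .
        qed
        then have "(norm (fst \<omega>))\<^sup>2 * (indicator ascending y * gfun M (inverse t) (perm_vec p y)) \<le> (norm (fst \<omega>))\<^sup>2 * \<bar>d t \<omega>\<bar>"
          by (intro mult_left_mono) auto
        then show "indicator ascending (fst \<omega> + inverse t *\<^sub>R snd \<omega>) * (norm (fst \<omega>))\<^sup>2 * gfun M (inverse t) (perm_vec p (fst \<omega> + inverse t *\<^sub>R snd \<omega>))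
            \<le> (norm (fst \<omega>))\<^sup>2 * \<bar>d t \<omega>\<bar>"
          unfolding y_def by (simp add: mult.commute mult.left_commute)
      qed
      finally show ?case .
    qed
  qed
qed

lemma lim_Delta0: "(Delta_up M \<longlongrightarrow> 0) (at_right 0)"
proof -
  have pa: "prob ascending \<noteq> 0" by (simp add: prob_ascending)
  have "((\<lambda>t. \<Sum>p\<in>{p. p permutes (UNIV :: 'n set)}.
      joint_exp M (inverse t) (\<lambda>x y. indicator ascending y * (norm x)\<^sup>2 * gfun M (inverse t) (perm_vec p y))
        / joint_exp M (inverse t) (\<lambda>x y. indicator ascending y)) \<longlongrightarrow>
      (\<Sum>p\<in>{p. p permutes (UNIV :: 'n set)}. 0 / prob ascending)) at_top"
    by (intro tendsto_sum tendsto_divide lim_Tp0 lim_Dn0 pa) simp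
  then have "((\<lambda>t. Delta_up M (inverse t)) \<longlongrightarrow> 0) at_top"
    by (simp add: Delta_up_def)
  then show ?thesis by (simp add: filterlim_at_right_to_top)
qed

end



lemma AE_lborel_neq:
  assumes ij: "i \<noteq> j"
  shows "AE z in (lborel :: (real, 'n::finite) vec measure). z $ i \<noteq> z $ j"
proof -
  define a :: "(real, 'n) vec" where "a = axis i 1 - axis j 1"
  have a0: "a \<noteq> 0" using ij unfolding a_def by (metis axis_eq_axis right_minus_eq zero_neq_one)
  have H: "{z::(real, 'n) vec. z $ i = z $ j} = {z. a \<bullet> z = 0}"
    unfolding a_def by (auto simp: inner_diff_left inner_commute[of "axis _ _"] inner_axis)
  have cl: "closed {z::(real, 'n) vec. z $ i = z $ j}"
    by (intro closed_Collect_eq linear_continuous_on bounded_linear_vec_nth)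
  have "negligible {z::(real, 'n) vec. z $ i = z $ j}"
    unfolding H using a0 by (intro negligible_hyperplane) simp
  then have "{z::(real, 'n) vec. z $ i = z $ j} \<in> null_sets lborel"
    using borel_closed[OF cl] by (auto simp: null_sets_completion_iff negligible_iff_null_sets)
  from AE_not_in[OF this] show ?thesis by simp
qed

lemma AE_stdN_inj: "AE z in (stdN :: (real, 'n::finite) vec measure). inj (\<lambda>i. z $ i)"
proof -
  have 1: "AE z in (lborel :: (real, 'n) vec measure). i \<noteq> j \<longrightarrow> z $ i \<noteq> z $ j" for i j
    using AE_lborel_neq[of i j] by (cases "i = j") auto
  have 2: "AE z in (lborel :: (real, 'n) vec measure). \<forall>j\<in>UNIV. i \<noteq> j \<longrightarrow> z $ i \<noteq> z $ j" for i
    by (subst AE_finite_all) (blast intro: 1 | simp)+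
  have "AE z in (lborel :: (real, 'n) vec measure). \<forall>i\<in>UNIV. \<forall>j\<in>UNIV. i \<noteq> j \<longrightarrow> z $ i \<noteq> z $ j"
    by (subst AE_finite_all) (blast intro: 2 | simp)+
  then have "AE z in (lborel :: (real, 'n) vec measure). inj (\<lambda>i. z $ i)"
    by eventually_elim (auto simp: inj_def)
  then show ?thesis unfolding stdN_def by (subst AE_density) (auto elim: AE_mp)
qed

lemma stdN_ascending_pos: "0 < measure (stdN :: (real, 'n::{finite,linorder}) vec measure) ascending"
proof -
  interpret N: prob_space "stdN :: (real, 'n) vec measure" by (rule prob_space_stdN)
  define r :: "'n \<Rightarrow> real" where "r i = real (rk (id::'n\<Rightarrow>'n) i)" for i
  define l :: "(real, 'n) vec" where "l = (\<chi> i. r i)"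
  define u :: "(real, 'n) vec" where "u = (\<chi> i. r i + 1/2)"
  have sub: "cbox l u \<subseteq> ascending"
  proof
    fix z assume z: "z \<in> cbox l u"
    then have zb: "r i \<le> z $ i \<and> z $ i \<le> r i + 1/2" for i
      by (auto simp: mem_box_cart l_def u_def)
    show "z \<in> ascending" unfolding ascending_def
    proof (intro CollectI allI impI)
      fix i j :: 'n assume "i \<le> j"
      then consider "i = j" | "i < j" by fastforce
      then show "z $ i \<le> z $ j"
      proof cases
        case 2
        then have "rk (id::'n\<Rightarrow>'n) i < rk id j" using rk_less[of "id::'n\<Rightarrow>'n" i j] by simp
        then have "r i + 1 \<le> r j" unfolding r_def by simp
        then show ?thesis using zb[of i] zb[of j] by simp
      qed simp
    qed
  qed
  have lu: "l $ i \<le> u $ i" for i unfolding l_def u_def by simp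
  have "emeasure lborel (cbox l u) = ennreal (\<Prod>b\<in>Basis. (u - l) \<bullet> b)"
    using lu by (subst emeasure_lborel_cbox) (auto simp: Basis_vec_def inner_axis cart_eq_inner_axis[symmetric])
  moreover have "0 < (\<Prod>b\<in>(Basis :: (real, 'n) vec set). (u - l) \<bullet> b)"
    by (intro prod_pos) (auto simp: Basis_vec_def inner_axis l_def u_def)
  ultimately have box_pos: "emeasure lborel (cbox l u) \<noteq> 0"
    by (metis ennreal_eq_0_iff not_le)
  have "emeasure stdN (cbox l u) \<noteq> 0"
  proof
    assume "emeasure stdN (cbox l u) = 0"
    then have "(\<integral>\<^sup>+x. ennreal (gauss 1 x) * indicator (cbox l u) x \<partial>lborel) = 0"
      unfolding stdN_def by (subst (asm) emeasure_density) auto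
    then have "AE x in lborel. ennreal (gauss 1 x) * indicator (cbox l u) x = 0"
      by (subst (asm) nn_integral_0_iff_AE) auto
    then have "AE x in lborel. x \<notin> cbox l u"
    proof eventually_elim
      fix x :: "(real, 'n) vec"
      assume "ennreal (gauss 1 x) * indicator (cbox l u) x = 0"
      moreover have "0 < gauss 1 x" by (rule gauss_pos) simp
      ultimately show "x \<notin> cbox l u" by (auto simp: indicator_def)
    qed
    then have "emeasure lborel (cbox l u) = 0"
      by (subst (asm) AE_iff_measurable[where N="cbox l u"]) auto
    with box_pos show False by simp
  qed
  then have "0 < measure stdN (cbox l u)"
    by (simp add: N.emeasure_eq_measure zero_less_measure_iff)
  also have "\<dots> \<le> measure (stdN :: (real, 'n) vec measure) ascending"
    using sub by (intro N.finite_measure_mono) auto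
  finally show ?thesis .
qed




lemma nd_split:
  assumes t: "0 < t"
  shows "normal_density 0 t (a - b) = normal_density 0 t a * exp (a * inverse t * b * inverse t - b\<^sup>2 / 2 * (inverse t)\<^sup>2)"
proof -
  define E where "E = a * inverse t * b * inverse t - b\<^sup>2 / 2 * (inverse t)\<^sup>2"
  have eq: "-((a - b)\<^sup>2) / (2 * t\<^sup>2) = - (a\<^sup>2) / (2 * t\<^sup>2) + E"
    using t unfolding E_def by (simp add: field_simps power2_eq_square)
  have "exp (-((a - b)\<^sup>2) / (2 * t\<^sup>2)) = exp (- (a\<^sup>2) / (2 * t\<^sup>2) + E)" by (simp only: eq)
  also have "\<dots> = exp (- (a\<^sup>2) / (2 * t\<^sup>2)) * exp E" by (rule exp_add)
  finally have ex: "exp (-((a - b)\<^sup>2) / (2 * t\<^sup>2)) = exp (- (a\<^sup>2) / (2 * t\<^sup>2)) * exp E" .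
  show ?thesis
    unfolding normal_density_def E_def[symmetric] using ex by simp
qed

context TS begin

lemma post_lim_inf:
  fixes w :: "real \<Rightarrow> (real, 'n) vec"
  assumes wl: "((\<lambda>t. inverse t *\<^sub>R w t) \<longlongrightarrow> w0) at_top" and B[measurable]: "B \<in> sets borel"
  shows "((\<lambda>t. post_prob M t B (w t)) \<longlongrightarrow> prob B) at_top"
proof -
  define u where "u t = inverse t *\<^sub>R w t" for t
  have ul: "(u \<longlongrightarrow> w0) at_top" unfolding u_def[abs_def] by (rule wl)
  define R where "R t x = (\<Prod>i\<in>UNIV. exp (u t $ i * x $ i * inverse t - (x $ i)\<^sup>2 / 2 * (inverse t)\<^sup>2))"
    for t and x :: "(real, 'n) vec"
  have Rm[measurable]: "R t \<in> borel_measurable borel" for t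
    unfolding R_def[abs_def] by measurable
  have Rpos: "0 < R t x" for t x unfolding R_def by (intro prod_pos) auto
  have gsplit: "gauss t (w t - x) = gauss t (w t) * R t x" if t: "0 < t" for t x
  proof -
    have "w t $ i * inverse t = u t $ i" for i unfolding u_def by simp
    then show ?thesis
      unfolding gauss_def R_def prod.distrib[symmetric]
      by (intro prod.cong refl) (simp add: nd_split[OF t])
  qed
  have post_eq: "post_prob M t B (w t) = (\<integral>x. indicator B x * R t x \<partial>M) / (\<integral>x. R t x \<partial>M)"
    if t: "0 < t" for t
  proof -
    have gp: "0 < gauss t (w t)" using gauss_pos[OF t] .
    have e1: "(\<lambda>x. indicator B x * gauss t (w t - x)) = (\<lambda>x. gauss t (w t) * (indicator B x * R t x))"
      by (auto simp: gsplit[OF t] fun_eq_iff)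
    have e2: "(\<lambda>x. gauss t (w t - x)) = (\<lambda>x. gauss t (w t) * R t x)"
      by (auto simp: gsplit[OF t] fun_eq_iff)
    have "post_prob M t B (w t) = (gauss t (w t) * (\<integral>x. indicator B x * R t x \<partial>M)) / (gauss t (w t) * (\<integral>x. R t x \<partial>M))"
      unfolding post_prob_def e1 e2 by simp
    also have "\<dots> = (\<integral>x. indicator B x * R t x \<partial>M) / (\<integral>x. R t x \<partial>M)"
      using gp by simp
    finally show ?thesis .
  qed
  have Rlim: "((\<lambda>t. R t x) \<longlongrightarrow> 1) at_top" for x
  proof -
    have "((\<lambda>t. R t x) \<longlongrightarrow> (\<Prod>i\<in>UNIV. exp (w0 $ i * x $ i * 0 - (x $ i)\<^sup>2 / 2 * 0\<^sup>2))) at_top"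
      unfolding R_def
      by (intro tendsto_prod tendsto_intros tendsto_vec_nth ul tendsto_inverse_0_at_top filterlim_ident)
    then show ?thesis by simp
  qed
  define C where "C = (\<Prod>i\<in>UNIV. exp ((\<bar>w0 $ i\<bar> + 1)\<^sup>2 / 2))"
  have ev: "eventually (\<lambda>t. \<forall>i. \<bar>u t $ i - w0 $ i\<bar> < 1) at_top"
  proof (intro eventually_all_finite)
    fix i
    have "((\<lambda>t. u t $ i) \<longlongrightarrow> w0 $ i) at_top" by (intro tendsto_vec_nth ul)
    from tendstoD[OF this, of 1] show "eventually (\<lambda>t. \<bar>u t $ i - w0 $ i\<bar> < 1) at_top"
      by (simp add: dist_real_def)
  qed
  have Rbound: "eventually (\<lambda>t. \<forall>x. R t x \<le> C) at_top"
    using ev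
  proof eventually_elim
    case (elim t)
    show ?case
    proof
      fix x :: "(real, 'n) vec"
      show "R t x \<le> C" unfolding R_def C_def
      proof (intro prod_mono conjI)
        fix i
        define v where "v = u t $ i"
        define s where "s = inverse t"
        have "v * x $ i * s - (x $ i)\<^sup>2 / 2 * s\<^sup>2 \<le> v\<^sup>2 / 2"
        proof -
          have "0 \<le> (v - x $ i * s)\<^sup>2" by simp
          then show ?thesis by (simp add: power2_eq_square algebra_simps)
        qed
        also have "v\<^sup>2 \<le> (\<bar>w0 $ i\<bar> + 1)\<^sup>2"
        proof -
          have "\<bar>v\<bar> \<le> \<bar>w0 $ i\<bar> + 1" using elim[rule_format, of i] unfolding v_def by linarith
          then show ?thesis by (metis abs_ge_zero abs_le_square_iff abs_of_nonneg add_nonneg_nonneg zero_le_one abs_abs)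
        qed
        then have "v\<^sup>2 / 2 \<le> (\<bar>w0 $ i\<bar> + 1)\<^sup>2 / 2" by simp
        finally show "exp (u t $ i * x $ i * inverse t - (x $ i)\<^sup>2 / 2 * (inverse t)\<^sup>2) \<le> exp ((\<bar>w0 $ i\<bar> + 1)\<^sup>2 / 2)"
          unfolding v_def s_def by simp
      qed simp
    qed
  qed
  have num: "((\<lambda>t. \<integral>x. indicator B x * R t x \<partial>M) \<longlongrightarrow> (\<integral>x. indicator B x \<partial>M)) at_top"
  proof (rule integral_dominated_convergence_at_top[where w="\<lambda>_. C"])
    show "AE x in M. ((\<lambda>t. indicator B x * R t x) \<longlongrightarrow> indicator B x) at_top"
    proof (intro AE_I2)
      fix x
      show "((\<lambda>t. indicator B x * R t x) \<longlongrightarrow> indicator B x) at_top"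
        using tendsto_mult[OF tendsto_const[of "indicator B x :: real"] Rlim[of x]] by simp
    qed
    show "\<forall>\<^sub>F t in at_top. AE x in M. norm (indicator B x * R t x) \<le> C"
      using Rbound
    proof eventually_elim
      case (elim t)
      show ?case
      proof (intro AE_I2)
        fix x
        have "norm (indicator B x * R t x) \<le> R t x" using Rpos[of t x] by (simp add: indicator_def)
        also have "\<dots> \<le> C" using elim by blast
        finally show "norm (indicator B x * R t x) \<le> C" .
      qed
    qed
  qed auto
  have den: "((\<lambda>t. \<integral>x. R t x \<partial>M) \<longlongrightarrow> (\<integral>x. 1 \<partial>M)) at_top"
  proof (rule integral_dominated_convergence_at_top[where w="\<lambda>_. C"])
    show "AE x in M. ((\<lambda>t. R t x) \<longlongrightarrow> 1) at_top"
      using Rlim by (intro AE_I2) auto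
    show "\<forall>\<^sub>F t in at_top. AE x in M. norm (R t x) \<le> C"
      using Rbound by eventually_elim (auto intro!: AE_I2 simp: abs_of_pos[OF Rpos])
  qed auto
  have "((\<lambda>t. (\<integral>x. indicator B x * R t x \<partial>M) / (\<integral>x. R t x \<partial>M)) \<longlongrightarrow> prob B / 1) at_top"
    using num den by (intro tendsto_divide) (auto simp: prob_space)
  then have lim: "((\<lambda>t. (\<integral>x. indicator B x * R t x \<partial>M) / (\<integral>x. R t x \<partial>M)) \<longlongrightarrow> prob B) at_top"
    by simp
  have "eventually (\<lambda>t. post_prob M t B (w t) = (\<integral>x. indicator B x * R t x \<partial>M) / (\<integral>x. R t x \<partial>M)) at_top"
    using eventually_gt_at_top[of 0] by eventually_elim (rule post_eq)
  from tendsto_cong[OF this] lim show ?thesis by simp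
qed

end



lemma ascending_scale: "0 < c \<Longrightarrow> (c *\<^sub>R y \<in> ascending) = (y \<in> ascending)"
  by (simp add: ascending_def)

lemma perm_vec_scale: "perm_vec p (c *\<^sub>R v) = c *\<^sub>R perm_vec p v"
  by (simp add: perm_vec_def vec_eq_iff)

lemma tendsto_perm_vec: "(f \<longlongrightarrow> l) F \<Longrightarrow> ((\<lambda>t. perm_vec p (f t)) \<longlongrightarrow> perm_vec p l) F"
  unfolding perm_vec_def by (intro tendsto_vec_lambda tendsto_vec_nth)

context TS begin

lemma AE_PP_inj_snd: "AE \<omega> in PP. inj (\<lambda>i. snd \<omega> $ i)"
proof (rule PS.AE_pair_measure)
  show "{\<omega> \<in> space PP. inj (\<lambda>i. snd \<omega> $ i)} \<in> sets PP" by measurable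
  show "AE x in M. AE z in stdN. inj (\<lambda>i. snd (x, z) $ i)"
    by (rule AE_I2) (simp add: AE_stdN_inj)
qed

lemma ind_cone: "0 < t \<Longrightarrow> indicator ascending (x + t *\<^sub>R z) = (indicator ascending (inverse t *\<^sub>R x + z) :: real)"
  using ascending_scale[of "inverse t" "x + t *\<^sub>R z"]
  by (simp add: indicator_def scaleR_add_right)

lemma integral_PP_prod:
  fixes f g :: "(real, 'n) vec \<Rightarrow> real"
  assumes [measurable]: "f \<in> borel_measurable borel" "g \<in> borel_measurable borel"
    and int: "integrable PP (\<lambda>\<omega>. f (fst \<omega>) * g (snd \<omega>))"
  shows "(\<integral>\<omega>. f (fst \<omega>) * g (snd \<omega>) \<partial>PP) = (\<integral>x. f x \<partial>M) * (\<integral>z. g z \<partial>stdN)"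
proof -
  have "(\<integral>\<omega>. f (fst \<omega>) * g (snd \<omega>) \<partial>PP) = (\<integral>x. (\<integral>z. f x * g z \<partial>stdN) \<partial>M)"
    using PS.integral_fst'[OF int] by simp
  also have "\<dots> = (\<integral>x. f x * (\<integral>z. g z \<partial>stdN) \<partial>M)" by simp
  also have "\<dots> = (\<integral>x. f x \<partial>M) * (\<integral>z. g z \<partial>stdN)" by simp
  finally show ?thesis .
qed


lemma lim_cone_ind:
  "AE \<omega> in PP. ((\<lambda>t. indicator ascending (inverse t *\<^sub>R fst \<omega> + snd \<omega>) :: real) \<longlongrightarrow> indicator ascending (snd \<omega>)) at_top"
  using AE_PP_inj_snd
proof eventually_elim
  fix \<omega> :: "(real, 'n) vec \<times> (real, 'n) vec" assume inj: "inj (\<lambda>i. snd \<omega> $ i)"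
  have "((\<lambda>t. inverse t *\<^sub>R fst \<omega> + snd \<omega>) \<longlongrightarrow> 0 *\<^sub>R fst \<omega> + snd \<omega>) at_top"
    by (intro tendsto_intros tendsto_inverse_0_at_top filterlim_ident)
  then have "((\<lambda>t. inverse t *\<^sub>R fst \<omega> + snd \<omega>) \<longlongrightarrow> snd \<omega>) at_top" by simp
  from ind_perm_eventually[OF inj this, of id]
  show "((\<lambda>t. indicator ascending (inverse t *\<^sub>R fst \<omega> + snd \<omega>) :: real) \<longlongrightarrow> indicator ascending (snd \<omega>)) at_top"
    by (intro tendsto_eventually) simp
qed

lemma lim_Dn_inf: "((\<lambda>t. joint_exp M t (\<lambda>x y. indicator ascending y)) \<longlongrightarrow> measure (stdN :: (real, 'n) vec measure) ascending) at_top"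
proof -
  have ev: "eventually (\<lambda>t. joint_exp M t (\<lambda>x y. indicator ascending y) =
     (\<integral>\<omega>. indicator ascending (inverse t *\<^sub>R fst \<omega> + snd \<omega>) \<partial>PP)) at_top"
    using eventually_gt_at_top[of 0]
    by eventually_elim (simp add: Dn_conv case_prod_beta' ind_cone)
  have "((\<lambda>t. \<integral>\<omega>. indicator ascending (inverse t *\<^sub>R fst \<omega> + snd \<omega>) \<partial>PP) \<longlongrightarrow>
         ((\<integral>\<omega>. indicator ascending (snd \<omega>) \<partial>PP) :: real)) at_top"
  proof (rule integral_dominated_convergence_at_top[where w="\<lambda>_. 1"])
    show "\<forall>\<^sub>F t in at_top. AE \<omega> in PP. norm (indicator ascending (inverse t *\<^sub>R fst \<omega> + snd \<omega>) :: real) \<le> 1"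
      by (intro always_eventually allI AE_I2) (auto simp: indicator_def)
  qed (auto simp: lim_cone_ind)
  also have "(\<integral>\<omega>. (indicator ascending (snd \<omega>) :: real) \<partial>PP) = measure (stdN :: (real, 'n) vec measure) ascending"
  proof -
    have "(\<integral>\<omega>. indicator ascending (snd \<omega>) \<partial>PP) = (\<integral>\<omega>. 1 * (indicator ascending (snd \<omega>) :: real) \<partial>PP)" by simp
    also have "\<dots> = (\<integral>x. 1 \<partial>M) * (\<integral>z. indicator ascending z \<partial>(stdN :: (real, 'n) vec measure))"
      by (rule integral_PP_prod[where f="\<lambda>_. 1"]) (auto intro!: integrable_PP_bound[where C=1])
    also have "\<dots> = measure (stdN :: (real, 'n) vec measure) ascending" by (simp add: prob_space prob_space.prob_space[OF prob_space_stdN])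
    finally show ?thesis .
  qed
  finally have lim: "((\<lambda>t. \<integral>\<omega>. indicator ascending (inverse t *\<^sub>R fst \<omega> + snd \<omega>) \<partial>PP) \<longlongrightarrow> measure (stdN :: (real, 'n) vec measure) ascending) at_top" .
  show ?thesis using tendsto_cong[OF ev] lim by blast
qed

lemma lim_S_inf:
  "((\<lambda>t. \<integral>\<omega>. indicator ascending (inverse t *\<^sub>R fst \<omega> + snd \<omega>) * (norm (fst \<omega>))\<^sup>2 \<partial>PP) \<longlongrightarrow>
     (\<integral>x. (norm x)\<^sup>2 \<partial>M) * measure (stdN :: (real, 'n) vec measure) ascending) at_top"
proof -
  have W: "integrable PP (\<lambda>\<omega>. (norm (fst \<omega>))\<^sup>2)"
    using integrable_PP_normsq by (simp add: case_prod_beta')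
  have "((\<lambda>t. \<integral>\<omega>. indicator ascending (inverse t *\<^sub>R fst \<omega> + snd \<omega>) * (norm (fst \<omega>))\<^sup>2 \<partial>PP) \<longlongrightarrow>
     (\<integral>\<omega>. (norm (fst \<omega>))\<^sup>2 * indicator ascending (snd \<omega>) \<partial>PP)) at_top"
  proof (rule integral_dominated_convergence_at_top[OF _ _ W])
    show "AE \<omega> in PP. ((\<lambda>t. indicator ascending (inverse t *\<^sub>R fst \<omega> + snd \<omega>) * (norm (fst \<omega>))\<^sup>2) \<longlongrightarrow>
        (norm (fst \<omega>))\<^sup>2 * indicator ascending (snd \<omega>)) at_top"
      using lim_cone_ind
    proof eventually_elim
      case (elim \<omega>)
      from tendsto_mult[OF elim tendsto_const[of "(norm (fst \<omega>))\<^sup>2"]] show ?case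
        by (simp add: mult.commute)
    qed
    show "\<forall>\<^sub>F t in at_top. AE \<omega> in PP. norm (indicator ascending (inverse t *\<^sub>R fst \<omega> + snd \<omega>) * (norm (fst \<omega>))\<^sup>2) \<le> (norm (fst \<omega>))\<^sup>2"
      by (intro always_eventually allI AE_I2) (auto simp: indicator_def)
  qed measurable
  also have "(\<integral>\<omega>. (norm (fst \<omega>))\<^sup>2 * indicator ascending (snd \<omega>) \<partial>PP) =
     (\<integral>x. (norm x)\<^sup>2 \<partial>M) * (\<integral>z. indicator ascending z \<partial>(stdN :: (real, 'n) vec measure))"
  proof (rule integral_PP_prod)
    show "integrable PP (\<lambda>\<omega>. (norm (fst \<omega>))\<^sup>2 * indicator ascending (snd \<omega>))"
      by (rule Bochner_Integration.integrable_bound[OF W]) (auto simp: indicator_def)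
  qed auto
  also have "(\<integral>z. indicator ascending z \<partial>(stdN :: (real, 'n) vec measure)) = measure (stdN :: (real, 'n) vec measure) ascending"
    by simp
  finally show ?thesis .
qed

lemma lim_gfun_inf:
  assumes p: "p permutes UNIV"
  shows "((\<lambda>t. gfun M t (perm_vec p (x + t *\<^sub>R z))) \<longlongrightarrow> prob ascending * (1 - prob ascending)) at_top"
proof -
  have ev: "eventually (\<lambda>t. perm_vec p (inverse t *\<^sub>R x + z) = inverse t *\<^sub>R perm_vec p (x + t *\<^sub>R z)) at_top"
    using eventually_gt_at_top[of 0]
    by eventually_elim (simp add: perm_vec_scale[symmetric] scaleR_add_right)
  have "((\<lambda>t. perm_vec p (inverse t *\<^sub>R x + z)) \<longlongrightarrow> perm_vec p (0 *\<^sub>R x + z)) at_top"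
    by (intro tendsto_perm_vec tendsto_intros tendsto_inverse_0_at_top filterlim_ident)
  then have "((\<lambda>t. inverse t *\<^sub>R perm_vec p (x + t *\<^sub>R z)) \<longlongrightarrow> perm_vec p z) at_top"
    using tendsto_cong[OF ev] by simp
  from post_lim_inf[OF this ascending_borel]
  have "((\<lambda>t. post_prob M t ascending (perm_vec p (x + t *\<^sub>R z))) \<longlongrightarrow> prob ascending) at_top" .
  then show ?thesis unfolding gfun_def by (intro tendsto_intros)
qed

lemma prob_asc_01: "0 \<le> prob ascending * (1 - prob ascending)" "prob ascending * (1 - prob ascending) \<le> 1"
  by (auto intro!: mult_nonneg_nonneg mult_le_one)

lemma ind_mul_le: "0 \<le> a \<Longrightarrow> \<bar>(indicator S y :: real) * a * b\<bar> \<le> a * \<bar>b\<bar>"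
  by (auto simp: indicator_def abs_mult)

lemma lim_err_inf:
  assumes p: "p permutes UNIV"
  shows "((\<lambda>t. \<integral>\<omega>. indicator ascending (fst \<omega> + t *\<^sub>R snd \<omega>) * (norm (fst \<omega>))\<^sup>2 *
     (gfun M t (perm_vec p (fst \<omega> + t *\<^sub>R snd \<omega>)) - prob ascending * (1 - prob ascending)) \<partial>PP) \<longlongrightarrow> 0) at_top"
proof -
  let ?c = "prob ascending * (1 - prob ascending)"
  have W: "integrable PP (\<lambda>\<omega>. (norm (fst \<omega>))\<^sup>2)"
    using integrable_PP_normsq by (simp add: case_prod_beta')
  have "((\<lambda>t. \<integral>\<omega>. indicator ascending (fst \<omega> + t *\<^sub>R snd \<omega>) * (norm (fst \<omega>))\<^sup>2 *
     (gfun M t (perm_vec p (fst \<omega> + t *\<^sub>R snd \<omega>)) - ?c) \<partial>PP) \<longlongrightarrow> (\<integral>\<omega>. 0 \<partial>PP)) at_top"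
  proof (rule integral_dominated_convergence_at_top[OF _ _ W])
    show "AE \<omega> in PP. ((\<lambda>t. indicator ascending (fst \<omega> + t *\<^sub>R snd \<omega>) * (norm (fst \<omega>))\<^sup>2 *
     (gfun M t (perm_vec p (fst \<omega> + t *\<^sub>R snd \<omega>)) - ?c)) \<longlongrightarrow> 0) at_top"
    proof (rule AE_I2, rule Lim_null_comparison)
      fix \<omega> :: "(real, 'n) vec \<times> (real, 'n) vec"
      show "\<forall>\<^sub>F t in at_top. norm (indicator ascending (fst \<omega> + t *\<^sub>R snd \<omega>) * (norm (fst \<omega>))\<^sup>2 *
         (gfun M t (perm_vec p (fst \<omega> + t *\<^sub>R snd \<omega>)) - ?c)) \<le>
         (norm (fst \<omega>))\<^sup>2 * \<bar>gfun M t (perm_vec p (fst \<omega> + t *\<^sub>R snd \<omega>)) - ?c\<bar>"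
        by (intro always_eventually allI) (simp only: real_norm_def, rule ind_mul_le, simp)
      have "((\<lambda>t. gfun M t (perm_vec p (fst \<omega> + t *\<^sub>R snd \<omega>)) - ?c) \<longlongrightarrow> ?c - ?c) at_top"
        by (intro tendsto_diff tendsto_const lim_gfun_inf[OF p])
      then have "((\<lambda>t. gfun M t (perm_vec p (fst \<omega> + t *\<^sub>R snd \<omega>)) - ?c) \<longlongrightarrow> 0) at_top"
        by simp
      from tendsto_rabs_zero[OF this]
      have "((\<lambda>t. \<bar>gfun M t (perm_vec p (fst \<omega> + t *\<^sub>R snd \<omega>)) - ?c\<bar>) \<longlongrightarrow> 0) at_top" .
      from tendsto_mult[OF tendsto_const[of "(norm (fst \<omega>))\<^sup>2"] this]
      show "((\<lambda>t. (norm (fst \<omega>))\<^sup>2 * \<bar>gfun M t (perm_vec p (fst \<omega> + t *\<^sub>R snd \<omega>)) - ?c\<bar>) \<longlongrightarrow> 0) at_top"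
        by simp
    qed
    show "\<forall>\<^sub>F t in at_top. AE \<omega> in PP. norm (indicator ascending (fst \<omega> + t *\<^sub>R snd \<omega>) * (norm (fst \<omega>))\<^sup>2 *
         (gfun M t (perm_vec p (fst \<omega> + t *\<^sub>R snd \<omega>)) - ?c)) \<le> (norm (fst \<omega>))\<^sup>2"
      using eventually_gt_at_top[of 0]
    proof eventually_elim
      case (elim t)
      show ?case
      proof (intro AE_I2)
        fix \<omega> :: "(real, 'n) vec \<times> (real, 'n) vec"
        let ?g = "gfun M t (perm_vec p (fst \<omega> + t *\<^sub>R snd \<omega>))"
        have g01: "0 \<le> ?g" "?g \<le> 1" using gfun_bounds[OF elim] by auto
        have "\<bar>?g - ?c\<bar> \<le> 1" using g01 prob_asc_01 by (simp only: abs_le_iff) linarith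
        then have "\<bar>indicator ascending (fst \<omega> + t *\<^sub>R snd \<omega>) * (?g - ?c)\<bar> \<le> (1::real)"
          by (auto simp: indicator_def)
        then have "(norm (fst \<omega>))\<^sup>2 * \<bar>indicator ascending (fst \<omega> + t *\<^sub>R snd \<omega>) * (?g - ?c)\<bar> \<le> (norm (fst \<omega>))\<^sup>2"
          by (intro mult_left_le) auto
        then show "norm (indicator ascending (fst \<omega> + t *\<^sub>R snd \<omega>) * (norm (fst \<omega>))\<^sup>2 * (?g - ?c)) \<le> (norm (fst \<omega>))\<^sup>2"
          by (simp add: abs_mult mult_ac)
      qed
    qed
  qed measurable
  then show ?thesis by simp
qed

end



context TS begin

lemma lim_Tp_inf:
  assumes p: "p permutes UNIV"
  shows "((\<lambda>t. joint_exp M t (\<lambda>x y. indicator ascending y * (norm x)\<^sup>2 * gfun M t (perm_vec p y))) \<longlongrightarrow>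
     prob ascending * (1 - prob ascending) * ((\<integral>x. (norm x)\<^sup>2 \<partial>M) * measure (stdN :: (real, 'n) vec measure) ascending)) at_top"
proof -
  let ?c = "prob ascending * (1 - prob ascending)"
  have W: "integrable PP (\<lambda>\<omega>. (norm (fst \<omega>))\<^sup>2)"
    using integrable_PP_normsq by (simp add: case_prod_beta')
  have ev: "eventually (\<lambda>t. joint_exp M t (\<lambda>x y. indicator ascending y * (norm x)\<^sup>2 * gfun M t (perm_vec p y)) =
     (\<integral>\<omega>. indicator ascending (fst \<omega> + t *\<^sub>R snd \<omega>) * (norm (fst \<omega>))\<^sup>2 *
       (gfun M t (perm_vec p (fst \<omega> + t *\<^sub>R snd \<omega>)) - ?c) \<partial>PP) +
     ?c * (\<integral>\<omega>. indicator ascending (inverse t *\<^sub>R fst \<omega> + snd \<omega>) * (norm (fst \<omega>))\<^sup>2 \<partial>PP)) at_top"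
    using eventually_gt_at_top[of 0]
  proof eventually_elim
    case (elim t)
    let ?Y = "\<lambda>\<omega>::(real, 'n) vec \<times> (real, 'n) vec. fst \<omega> + t *\<^sub>R snd \<omega>"
    have i1: "integrable PP (\<lambda>\<omega>. indicator ascending (?Y \<omega>) * (norm (fst \<omega>))\<^sup>2 * (gfun M t (perm_vec p (?Y \<omega>)) - ?c))"
    proof (rule Bochner_Integration.integrable_bound[OF W])
      show "AE \<omega> in PP. norm (indicator ascending (?Y \<omega>) * (norm (fst \<omega>))\<^sup>2 * (gfun M t (perm_vec p (?Y \<omega>)) - ?c))
          \<le> norm ((norm (fst \<omega>))\<^sup>2)"
      proof (intro AE_I2)
        fix \<omega> :: "(real, 'n) vec \<times> (real, 'n) vec"
        let ?g = "gfun M t (perm_vec p (?Y \<omega>))"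
        have g01: "0 \<le> ?g" "?g \<le> 1" using gfun_bounds[OF elim] by auto
        have "\<bar>?g - ?c\<bar> \<le> 1" using g01 prob_asc_01 by (simp only: abs_le_iff) linarith
        then have "(norm (fst \<omega>))\<^sup>2 * \<bar>?g - ?c\<bar> \<le> (norm (fst \<omega>))\<^sup>2"
          by (intro mult_left_le) auto
        moreover have "\<bar>indicator ascending (?Y \<omega>) * (norm (fst \<omega>))\<^sup>2 * (?g - ?c)\<bar> \<le> (norm (fst \<omega>))\<^sup>2 * \<bar>?g - ?c\<bar>"
          by (rule ind_mul_le) simp
        ultimately show "norm (indicator ascending (?Y \<omega>) * (norm (fst \<omega>))\<^sup>2 * (?g - ?c)) \<le> norm ((norm (fst \<omega>))\<^sup>2)"
          by simp
      qed
    qed measurable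
    have i2: "integrable PP (\<lambda>\<omega>. indicator ascending (?Y \<omega>) * (norm (fst \<omega>))\<^sup>2)"
      by (rule Bochner_Integration.integrable_bound[OF W]) (auto simp: indicator_def)
    have "joint_exp M t (\<lambda>x y. indicator ascending y * (norm x)\<^sup>2 * gfun M t (perm_vec p y)) =
       (\<integral>\<omega>. indicator ascending (?Y \<omega>) * (norm (fst \<omega>))\<^sup>2 * gfun M t (perm_vec p (?Y \<omega>)) \<partial>PP)"
      unfolding Tp_conv[OF elim] by (simp add: case_prod_beta')
    also have "\<dots> = (\<integral>\<omega>. indicator ascending (?Y \<omega>) * (norm (fst \<omega>))\<^sup>2 * (gfun M t (perm_vec p (?Y \<omega>)) - ?c)
        + ?c * (indicator ascending (?Y \<omega>) * (norm (fst \<omega>))\<^sup>2) \<partial>PP)"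
      by (intro Bochner_Integration.integral_cong refl) (simp add: algebra_simps)
    also have "\<dots> = (\<integral>\<omega>. indicator ascending (?Y \<omega>) * (norm (fst \<omega>))\<^sup>2 * (gfun M t (perm_vec p (?Y \<omega>)) - ?c) \<partial>PP)
        + ?c * (\<integral>\<omega>. indicator ascending (?Y \<omega>) * (norm (fst \<omega>))\<^sup>2 \<partial>PP)"
      using i1 i2 by simp
    also have "(\<integral>\<omega>. indicator ascending (?Y \<omega>) * (norm (fst \<omega>))\<^sup>2 \<partial>PP) =
        (\<integral>\<omega>. indicator ascending (inverse t *\<^sub>R fst \<omega> + snd \<omega>) * (norm (fst \<omega>))\<^sup>2 \<partial>PP)"
      by (intro Bochner_Integration.integral_cong refl) (simp add: ind_cone[OF elim])
    finally show ?case .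
  qed
  have "((\<lambda>t. (\<integral>\<omega>. indicator ascending (fst \<omega> + t *\<^sub>R snd \<omega>) * (norm (fst \<omega>))\<^sup>2 *
       (gfun M t (perm_vec p (fst \<omega> + t *\<^sub>R snd \<omega>)) - ?c) \<partial>PP) +
     ?c * (\<integral>\<omega>. indicator ascending (inverse t *\<^sub>R fst \<omega> + snd \<omega>) * (norm (fst \<omega>))\<^sup>2 \<partial>PP)) \<longlongrightarrow>
     0 + ?c * ((\<integral>x. (norm x)\<^sup>2 \<partial>M) * measure (stdN :: (real, 'n) vec measure) ascending)) at_top"
    by (intro tendsto_add tendsto_mult tendsto_const lim_err_inf[OF p] lim_S_inf)
  then show ?thesis using tendsto_cong[OF ev] by simp
qed

lemma lim_Delta_inf:
  "(Delta_up M \<longlongrightarrow> (\<integral>x. (norm x)\<^sup>2 \<partial>M) * (1 - 1 / fact CARD('n))) at_top"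
proof -
  let ?c = "prob ascending * (1 - prob ascending)"
  let ?N = "measure (stdN :: (real, 'n) vec measure) ascending"
  let ?E = "\<integral>x. (norm x)\<^sup>2 \<partial>M"
  have N0: "?N \<noteq> 0" by (rule stdN_ascending_pos[THEN less_imp_neq, THEN not_sym])
  have "((\<lambda>t. \<Sum>p\<in>{p. p permutes (UNIV :: 'n set)}.
      joint_exp M t (\<lambda>x y. indicator ascending y * (norm x)\<^sup>2 * gfun M t (perm_vec p y))
        / joint_exp M t (\<lambda>x y. indicator ascending y)) \<longlongrightarrow>
      (\<Sum>p\<in>{p. p permutes (UNIV :: 'n set)}. ?c * (?E * ?N) / ?N)) at_top"
    by (intro tendsto_sum tendsto_divide lim_Tp_inf lim_Dn_inf N0) simp
  moreover have "(\<Sum>p\<in>{p. p permutes (UNIV :: 'n set)}. ?c * (?E * ?N) / ?N) = ?E * (1 - 1 / fact CARD('n))"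
  proof -
    have "(\<Sum>p\<in>{p. p permutes (UNIV :: 'n set)}. ?c * (?E * ?N) / ?N) = fact CARD('n) * (?c * ?E)"
      using N0 by (simp add: card_permutations)
    also have "\<dots> = ?E * (1 - 1 / fact CARD('n))"
      by (simp add: prob_ascending field_simps)
    finally show ?thesis .
  qed
  ultimately show ?thesis by (simp add: Delta_up_def[abs_def])
qed

end

theorem theorem4:
  fixes M :: "(real ^ ('n::{finite,linorder})) measure"
  assumes "prob_space M"
    and "sets M = sets borel"
    and "exchangeable M"
    and "\<And>k. integrable M (\<lambda>x. (x $ k)\<^sup>2)"
    and "AE x in M. inj (\<lambda>i. x $ i)"
  shows "(Delta_up M \<longlongrightarrow> 0) (at_right 0) \<and>
         (Delta_up M \<longlongrightarrow> (\<integral>x. (norm x)\<^sup>2 \<partial>M) * (1 - 1 / fact CARD('n))) at_top"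
proof -
  interpret TS M
    using assms by (simp add: TS_def TS_axioms_def)
  show ?thesis using lim_Delta0 lim_Delta_inf by simp
qed


end
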